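(* Let $\mathcal{M}=(E_t,\mathcal{T})$ be a simple oriented matroid, $a\in E_t$, and $k$ an integer with $1\le k\le|\mathcal{T}|/2$. Put $h=\lfloor(|\mathcal{T}|-k+1)/2\rfloor$, $B=\binom{|\mathcal{T}|-k}{h}$, $\mathcal{P}_a=\bigcup_{e\in E_t-\{a\}}\binom{\mathcal{T}^+_e(\mathcal{M})}{h}$, $\mathcal{N}^+=\binom{\mathcal{T}^+_a(\mathcal{M})}{h}-\mathcal{P}_a$, $\mathcal{N}^-=\binom{\mathcal{T}^-_a(\mathcal{M})}{h}-\mathcal{P}_a$. For families $\mathcal{G}$ of tope sets write $U_{\mathcal{G}}=\bigcup_{G\in\mathcal{G}}G$ (with $U_\emptyset=\emptyset$). Define \[ S_1(Q)=\sum_{\substack{\mathcal{G}''\subseteq\mathcal{P}_a:\ 0\le\#\mathcal{G}''\le B-1,\\ |U_{\mathcal{G}''}|\le|\mathcal{T}|-k}}(-1)^{\#\mathcal{G}''}\Biggl(\sum_{\substack{\mathcal{G}'\subseteq\mathcal{N}^-:\ 1\le\#\mathcal{G}'\le B-\#\mathcal{G}'',\\ |U_{\mathcal{G}'}|\le|\mathcal{T}|-k}}(-1)^{\#\mathcal{G}'}Q(\mathcal{G}',\mathcal{G}'')-\sum_{\substack{\mathcal{G}'\subseteq\mathcal{N}^+:\ 1\le\#\mathcal{G}'\le B-\#\mathcal{G}'',\\ |U_{\mathcal{G}'}|\le|\mathcal{T}|-k}}(-1)^{\#\mathcal{G}'}Q(\mathcal{G}',\mathcal{G}'')\Biggr)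 \] and \[ S_2(\mathfrak{Q})=\sum_{\substack{G''\in\boldsymbol{\mathcal{E}}(\mathcal{P}_a):\\ 0\le|G''|\le|\mathcal{T}|-k}}\mu(\hat0,G'')\Biggl(\sum_{\substack{G'\in\boldsymbol{\mathcal{E}}(\mathcal{N}^-):\\ 0<|G'|\le|\mathcal{T}|-k}}\mu(\hat0,G')\,\mathfrak{Q}(G',G'')-\sum_{\substack{G'\in\boldsymbol{\mathcal{E}}(\mathcal{N}^+):\\ 0<|G'|\le|\mathcal{T}|-k}}\mu(\hat0,G')\,\mathfrak{Q}(G',G'')\Biggr), \] where each $\mu$ is the Möbius function of the lattice in which its arguments lie, and $G''=\hat0$ is interpreted as $\emptyset$. (i) With $Q(\mathcal{G}',\mathcal{G}'')=\binom{|\mathcal{T}|-|U_{\mathcal{G}'\cup\mathcal{G}''}|}{k}$ and $\mathfrak{Q}(G',G'')=\binom{|\mathcal{T}|-|G'\cup G''|}{k}$, both $S_1(Q)$ and $S_2(\mathfrak{Q})$ equal $\kappa^{\ast}_k({}_{-a}\mathcal{M})-\kappa^{\ast}_k(\mathcal{M})$. (ii) With $Q(\mathcal{G}',\mathcal{G}'')=\sum_{j=0}^{k}\binom{|U\cup-U|-|U|}{j}\binom{\frac12(|\mathcal{T}|-|U\cup-U|)}{k-j}2^{k-j}$ where $U=U_{\mathcal{G}'\cup\mathcal{G}''}$, and $\mathfrak{Q}(G',G'')$ given by the same expression with $U=G'\cup G''$, both $S_1(Q)$ and $S_2(\mathfrak{Q})$ equal $\mathring{\kappa}^{\ast}_k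({}_{-a}\mathcal{M})-\mathring{\kappa}^{\ast}_k(\mathcal{M})$.
   Context: Let $t\ge 1$ and $E_t=\{1,\dots,t\}$. $\mathcal{M}=(E_t,\mathcal{T})$ is a simple oriented matroid (no loops, parallel or antiparallel elements) with set of topes $\mathcal{T}\subseteq\{+,-\}^{E_t}$, closed under negation. For $e\in E_t$, $\mathcal{T}^+_e(\mathcal{M})=\{T\in\mathcal{T}: T(e)=+\}$ and $\mathcal{T}^-_e(\mathcal{M})=\{T\in\mathcal{T}: T(e)=-\}$. For $G\subseteq\mathcal{T}$, $-G=\{-T:T\in G\}$. $\binom{X}{j}$ denotes the family of $j$-element subsets of $X$; numerical binomial coefficients $\binom{n}{j}$ are $0$ when $j>n$ or $j<0$. For $a\in E_t$, ${}_{-a}\mathcal{M}$ is the reorientation of $\mathcal{M}$ on $\{a\}$: the oriented matroid on $E_t$ whose topes are the sign vectors obtained from the topes of $\mathcal{M}$ by negating the $a$-th component. For a family $\mathcal{G}$ of subsets of $\mathcal{T}$, $\boldsymbol{\mathcal{E}}(\mathcal{G})$ is the lattice of all unions $\bigcup_{F\in\mathcal{F}}F$ over nonempty subfamilies $\mathcal{F}\subseteq\mathcal{G}$, ordered by inclusion, with a new least element $\hat0$ adjoined and interpreted as the empty set ($|\hat0|=0$). A tope committee for an oriented matroid on $E_t$ with tope set $\mathcal{T}'$ is a subset $\mathcal{K}^{\ast}\subset\mathcal{T}'$ with $|\{T\in\mathcal{K}^{\ast}: T(e)=+\}|>\tfrac12|\mathcal{K}^{\ast}|$ for every $e\in E_t$;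 $\kappa^{\ast}_k(\cdot)$ counts tope committees of cardinality $k$, and $\mathring{\kappa}^{\ast}_k(\cdot)$ counts those containing no pair of opposite topes $\{T,-T\}$. *)

theory Defs
  imports Main
begin

datatype sign = Pos | Neg | Zero

fun neg_sign :: "sign \<Rightarrow> sign" where
  "neg_sign Pos = Neg" | "neg_sign Neg = Pos" | "neg_sign Zero = Zero"

type_synonym sv = "nat \<Rightarrow> sign"

text \<open>A sign vector on E_t is represented as a function nat => sign that is Zero outside {1..t}.\<close>
definition sv_on :: "nat \<Rightarrow> sv \<Rightarrow> bool" where
  "sv_on t X \<longleftrightarrow> (\<forall>e. e \<notin> {1..t} \<longrightarrow> X e = Zero)"

definition sv_zero :: sv where "sv_zero = (\<lambda>e. Zero)"

definition sv_neg :: "sv \<Rightarrow> sv" where "sv_neg X = (\<lambda>e. neg_sign (X e))"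

definition sv_comp :: "sv \<Rightarrow> sv \<Rightarrow> sv" where
  "sv_comp X Y = (\<lambda>e. if X e = Zero then Y e else X e)"

definition sv_sep :: "sv \<Rightarrow> sv \<Rightarrow> nat set" where
  "sv_sep X Y = {e. X e \<noteq> Zero \<and> Y e = neg_sign (X e)}"

definition sv_le :: "sv \<Rightarrow> sv \<Rightarrow> bool" where
  "sv_le X Y \<longleftrightarrow> (\<forall>e. X e \<noteq> Zero \<longrightarrow> X e = Y e)"

definition oriented_matroid :: "nat \<Rightarrow> sv set \<Rightarrow> bool" where
  "oriented_matroid t L \<longleftrightarrow>
     (\<forall>X\<in>L. sv_on t X) \<and>
     sv_zero \<in> L \<and>
     (\<forall>X\<in>L. sv_neg X \<in> L) \<and>
     (\<forall>X\<in>L. \<forall>Y\<in>L. sv_comp X Y \<in> L) \<and>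
     (\<forall>X\<in>L. \<forall>Y\<in>L. \<forall>e\<in>sv_sep X Y. \<exists>Z\<in>L. Z e = Zero \<and>
          (\<forall>f. f \<notin> sv_sep X Y \<longrightarrow> Z f = sv_comp X Y f))"

definition topes :: "sv set \<Rightarrow> sv set" where
  "topes L = {T\<in>L. \<forall>Y\<in>L. sv_le T Y \<longrightarrow> Y = T}"

definition simple_om :: "nat \<Rightarrow> sv set \<Rightarrow> bool" where
  "simple_om t L \<longleftrightarrow>
     (\<forall>e\<in>{1..t}. \<exists>X\<in>L. X e \<noteq> Zero) \<and>
     (\<forall>e\<in>{1..t}. \<forall>f\<in>{1..t}. e \<noteq> f \<longrightarrow>
        \<not> (\<forall>X\<in>L. X e = X f) \<and> \<not> (\<forall>X\<in>L. X e = neg_sign (X f)))"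

definition reorient_topes :: "nat \<Rightarrow> sv set \<Rightarrow> sv set" where
  "reorient_topes a TT = (\<lambda>T. T(a := neg_sign (T a))) ` TT"

definition topes_pos :: "sv set \<Rightarrow> nat \<Rightarrow> sv set" where
  "topes_pos TT e = {T\<in>TT. T e = Pos}"

definition topes_neg :: "sv set \<Rightarrow> nat \<Rightarrow> sv set" where
  "topes_neg TT e = {T\<in>TT. T e = Neg}"

definition tope_committee :: "nat \<Rightarrow> sv set \<Rightarrow> sv set \<Rightarrow> bool" where
  "tope_committee t TT K \<longleftrightarrow> K \<subset> TT \<and>
     (\<forall>e\<in>{1..t}. 2 * card {T\<in>K. T e = Pos} > card K)"

definition kappa_star :: "nat \<Rightarrow> nat \<Rightarrow> sv set \<Rightarrow> nat" where
  "kappa_star t k TT = card {K. tope_committee t TT K \<and> card K = k}"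

definition kappa_ring :: "nat \<Rightarrow> nat \<Rightarrow> sv set \<Rightarrow> nat" where
  "kappa_ring t k TT = card {K. tope_committee t TT K \<and> card K = k \<and>
       (\<forall>T\<in>K. sv_neg T \<notin> K)}"

definition subsets_of_card :: "'a set \<Rightarrow> nat \<Rightarrow> 'a set set" where
  "subsets_of_card X j = {Y. Y \<subseteq> X \<and> card Y = j}"

definition h_of :: "nat \<Rightarrow> nat \<Rightarrow> nat" where
  "h_of n k = (n - k + 1) div 2"

definition P_fam :: "nat \<Rightarrow> sv set \<Rightarrow> nat \<Rightarrow> nat \<Rightarrow> sv set set" where
  "P_fam t TT a k = (\<Union>e\<in>{1..t} - {a}. subsets_of_card (topes_pos TT e) (h_of (card TT) k))"

definition Nplus :: "nat \<Rightarrow> sv set \<Rightarrow> nat \<Rightarrow> nat \<Rightarrow> sv set set" where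
  "Nplus t TT a k = subsets_of_card (topes_pos TT a) (h_of (card TT) k) - P_fam t TT a k"

definition Nminus :: "nat \<Rightarrow> sv set \<Rightarrow> nat \<Rightarrow> nat \<Rightarrow> sv set set" where
  "Nminus t TT a k = subsets_of_card (topes_neg TT a) (h_of (card TT) k) - P_fam t TT a k"

definition S1 :: "nat \<Rightarrow> sv set \<Rightarrow> nat \<Rightarrow> nat \<Rightarrow> (sv set set \<Rightarrow> sv set set \<Rightarrow> int) \<Rightarrow> int" where
  "S1 t TT a k Q =
    (let n = card TT; h = h_of n k; B = int (n - k choose h);
         inner = (\<lambda>N G2. \<Sum>G1 \<in> {G1. G1 \<subseteq> N \<and> 1 \<le> card G1 \<and> int (card G1) \<le> B - int (card G2)
                                      \<and> card (\<Union>G1) \<le> n - k}.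
                           (-1::int) ^ card G1 * Q G1 G2)
     in \<Sum>G2 \<in> {G2. G2 \<subseteq> P_fam t TT a k \<and> int (card G2) \<le> B - 1 \<and> card (\<Union>G2) \<le> n - k}.
          (-1::int) ^ card G2 * (inner (Nminus t TT a k) G2 - inner (Nplus t TT a k) G2))"

definition moebius :: "'a set \<Rightarrow> ('a \<Rightarrow> 'a \<Rightarrow> bool) \<Rightarrow> 'a \<Rightarrow> 'a \<Rightarrow> int" where
  "moebius P le = (THE f. \<forall>x y. f x y =
      (if x \<in> P \<and> y \<in> P \<and> le x y then
         (if x = y then 1 else - (\<Sum>z\<in>{z\<in>P. le x z \<and> le z y \<and> z \<noteq> y}. f x z))
       else 0))"

text \<open>None represents the adjoined least element 0-hat (interpreted as the empty set);
  Some X represents the union X of a nonempty subfamily.\<close>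
definition lat_E :: "'a set set \<Rightarrow> 'a set option set" where
  "lat_E G = insert None {Some (\<Union>F) | F. F \<subseteq> G \<and> F \<noteq> {}}"

fun lat_le :: "'a set option \<Rightarrow> 'a set option \<Rightarrow> bool" where
  "lat_le None _ = True"
| "lat_le (Some X) None = False"
| "lat_le (Some X) (Some Y) = (X \<subseteq> Y)"

fun lat_val :: "'a set option \<Rightarrow> 'a set" where
  "lat_val None = {}"
| "lat_val (Some X) = X"

definition S2 :: "nat \<Rightarrow> sv set \<Rightarrow> nat \<Rightarrow> nat \<Rightarrow> (sv set \<Rightarrow> sv set \<Rightarrow> int) \<Rightarrow> int" where
  "S2 t TT a k Q =
    (let n = card TT;
         inner = (\<lambda>N G2. \<Sum>G1 \<in> {G1\<in>lat_E N. 0 < card (lat_val G1) \<and> card (lat_val G1) \<le> n - k}.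
                           moebius (lat_E N) lat_le None G1 * Q (lat_val G1) (lat_val G2))
     in \<Sum>G2 \<in> {G2\<in>lat_E (P_fam t TT a k). card (lat_val G2) \<le> n - k}.
          moebius (lat_E (P_fam t TT a k)) lat_le None G2 *
            (inner (Nminus t TT a k) G2 - inner (Nplus t TT a k) G2))"

definition Qkappa :: "sv set \<Rightarrow> nat \<Rightarrow> sv set \<Rightarrow> int" where
  "Qkappa TT k U = int (card TT - card U choose k)"

definition Qring :: "sv set \<Rightarrow> nat \<Rightarrow> sv set \<Rightarrow> int" where
  "Qring TT k U = (let W = U \<union> sv_neg ` U in
     int (\<Sum>j=0..k. (card W - card U choose j) * ((card TT - card W) div 2 choose (k - j)) * 2 ^ (k - j)))"

end

theory Submission imports Defs begin

lemma alt_pow: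
  assumes "finite Y"
  shows "(\<Sum>F\<in>Pow Y. (-1::int) ^ card F) = (if Y = {} then 1 else 0)"
  using assms
proof (induction Y rule: finite_induct)
  case empty
  then show ?case by simp
next
  case (insert x Y)
  have fin: "finite (Pow Y)" using insert by simp
  have disj: "Pow Y \<inter> insert x ` Pow Y = {}" using insert by auto
  have inj: "inj_on (insert x) (Pow Y)" unfolding inj_on_def by (metis PowD insert(2) insert_ident subsetD)
  have "(\<Sum>F\<in>Pow (insert x Y). (-1::int) ^ card F)
        = (\<Sum>F\<in>Pow Y. (-1::int) ^ card F) + (\<Sum>F\<in>insert x ` Pow Y. (-1::int) ^ card F)"
    unfolding Pow_insert using fin disj by (simp add: sum.union_disjoint)
  also have "(\<Sum>F\<in>insert x ` Pow Y. (-1::int) ^ card F) = (\<Sum>F\<in>Pow Y. (-1::int) ^ card (insert x F))"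
    using inj by (simp add: sum.reindex)
  also have "\<dots> = (\<Sum>F\<in>Pow Y. - ((-1::int) ^ card F))"
  proof (rule sum.cong)
    fix F assume "F \<in> Pow Y"
    then have "x \<notin> F" "finite F" using insert finite_subset by auto
    then show "(-1::int) ^ card (insert x F) = - ((-1) ^ card F)" by simp
  qed simp
  finally show ?case by (simp add: sum_negf)
qed

lemma incl_excl:
  assumes "finite A" "finite KS"
  shows "int (card {K\<in>KS. \<forall>X\<in>A. \<not> P X K})
     = (\<Sum>F\<in>Pow A. (-1::int) ^ card F * int (card {K\<in>KS. \<forall>X\<in>F. P X K}))"
proof -
  have "(\<Sum>F\<in>Pow A. (-1::int) ^ card F * int (card {K\<in>KS. \<forall>X\<in>F. P X K}))
      = (\<Sum>F\<in>Pow A. \<Sum>K\<in>KS. (-1::int) ^ card F * (if \<forall>X\<in>F. P X K then 1 else 0))"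
  proof (rule sum.cong)
    fix F
    have "int (card {K\<in>KS. \<forall>X\<in>F. P X K}) = (\<Sum>K\<in>KS. if \<forall>X\<in>F. P X K then 1 else 0)"
      using assms(2) by (simp add: sum.If_cases Int_def)
    then show "(-1::int) ^ card F * int (card {K\<in>KS. \<forall>X\<in>F. P X K}) =
         (\<Sum>K\<in>KS. (-1::int) ^ card F * (if \<forall>X\<in>F. P X K then 1 else 0))"
      by (simp add: sum_distrib_left)
  qed simp
  also have "\<dots> = (\<Sum>K\<in>KS. \<Sum>F\<in>Pow A. (-1::int) ^ card F * (if \<forall>X\<in>F. P X K then 1 else 0))"
    by (rule sum.swap)
  also have "\<dots> = (\<Sum>K\<in>KS. \<Sum>F\<in>Pow {X\<in>A. P X K}. (-1::int) ^ card F)"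
  proof (rule sum.cong)
    fix K
    have "(\<Sum>F\<in>Pow A. (-1::int) ^ card F * (if \<forall>X\<in>F. P X K then 1 else 0))
        = (\<Sum>F\<in>Pow {X\<in>A. P X K}. (-1::int) ^ card F)"
      by (intro sum.mono_neutral_cong_right) (use assms(1) in auto)
    then show "(\<Sum>F\<in>Pow A. (-1::int) ^ card F * (if \<forall>X\<in>F. P X K then 1 else 0)) =
         (\<Sum>F\<in>Pow {X\<in>A. P X K}. (-1::int) ^ card F)" .
  qed simp
  also have "\<dots> = (\<Sum>K\<in>KS. if \<forall>X\<in>A. \<not> P X K then 1 else 0)"
  proof (rule sum.cong)
    fix K
    have "finite {X\<in>A. P X K}" using assms(1) by simp
    then show "(\<Sum>F\<in>Pow {X\<in>A. P X K}. (-1::int) ^ card F) = (if \<forall>X\<in>A. \<not> P X K then 1 else 0)"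
      by (simp add: alt_pow)
  qed simp
  also have "\<dots> = int (card {K\<in>KS. \<forall>X\<in>A. \<not> P X K})"
    using assms(2) by (simp add: sum.If_cases Int_def)
  finally show ?thesis by simp
qed

lemma sum_Pow_Un:
  assumes "finite P" "finite N" "P \<inter> N = {}"
  shows "(\<Sum>F\<in>Pow (P \<union> N). f F) = (\<Sum>G2\<in>Pow P. \<Sum>G1\<in>Pow N. f (G1 \<union> G2))"
proof -
  have inj: "inj_on (\<lambda>(G2,G1). G1 \<union> G2) (Pow P \<times> Pow N)"
  proof (rule inj_onI)
    fix x y assume "x \<in> Pow P \<times> Pow N" "y \<in> Pow P \<times> Pow N"
      "(case x of (G2, G1) \<Rightarrow> G1 \<union> G2) = (case y of (G2, G1) \<Rightarrow> G1 \<union> G2)"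
    then show "x = y" using assms(3) by (cases x; cases y) (clarsimp, blast)
  qed
  have im: "(\<lambda>(G2,G1). G1 \<union> G2) ` (Pow P \<times> Pow N) = Pow (P \<union> N)"
  proof
    show "(\<lambda>(G2,G1). G1 \<union> G2) ` (Pow P \<times> Pow N) \<subseteq> Pow (P \<union> N)" by auto
    show "Pow (P \<union> N) \<subseteq> (\<lambda>(G2,G1). G1 \<union> G2) ` (Pow P \<times> Pow N)"
    proof
      fix F assume "F \<in> Pow (P \<union> N)"
      then have "F = (\<lambda>(G2,G1). G1 \<union> G2) (F \<inter> P, F \<inter> N)" "(F \<inter> P, F \<inter> N) \<in> Pow P \<times> Pow N" by auto
      then show "F \<in> (\<lambda>(G2,G1). G1 \<union> G2) ` (Pow P \<times> Pow N)" by blast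
    qed
  qed
  have "(\<Sum>F\<in>Pow (P \<union> N). f F) = (\<Sum>x\<in>Pow P \<times> Pow N. f ((\<lambda>(G2,G1). G1 \<union> G2) x))"
    using sum.reindex[OF inj, of f] im by simp
  also have "\<dots> = (\<Sum>G2\<in>Pow P. \<Sum>G1\<in>Pow N. f (G1 \<union> G2))"
    by (simp add: sum.cartesian_product split_def)
  finally show ?thesis .
qed


lemma moebius_rec:
  fixes P :: "'a set" and le :: "'a \<Rightarrow> 'a \<Rightarrow> bool" and r :: "'a \<Rightarrow> nat"
  assumes rk: "\<And>z y. z \<in> P \<Longrightarrow> y \<in> P \<Longrightarrow> le z y \<Longrightarrow> z \<noteq> y \<Longrightarrow> r z < r y"
  shows "moebius P le x y =
      (if x \<in> P \<and> y \<in> P \<and> le x y then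
         (if x = y then 1 else - (\<Sum>z\<in>{z\<in>P. le x z \<and> le z y \<and> z \<noteq> y}. moebius P le x z))
       else 0)"
proof -
  define R where "R = {(z,y). z \<in> P \<and> y \<in> P \<and> le z y \<and> z \<noteq> y}"
  have wfR: "wf R"
    by (rule wf_subset[OF wf_measure[of r]]) (auto simp: R_def measure_def inv_image_def rk)
  define H where "H = (\<lambda>x (g::'a \<Rightarrow> int) y. (if x \<in> P \<and> y \<in> P \<and> le x y then
         (if x = y then 1 else - (\<Sum>z\<in>{z\<in>P. le x z \<and> le z y \<and> z \<noteq> y}. g z))
       else 0))"
  define sol where "sol = (\<lambda>x. wfrec R (H x))"
  let ?Q = "\<lambda>f. \<forall>x y. f x y =
      (if x \<in> P \<and> y \<in> P \<and> le x y then
         (if x = y then 1 else - (\<Sum>z\<in>{z\<in>P. le x z \<and> le z y \<and> z \<noteq> y}. f x z))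
       else 0)"
  have ex: "?Q sol"
  proof (intro allI)
    fix x y
    have "sol x y = H x (cut (sol x) R y) y" unfolding sol_def by (rule wfrec[OF wfR])
    also have "\<dots> = H x (sol x) y"
    proof -
      have "(\<Sum>z\<in>{z\<in>P. le x z \<and> le z y \<and> z \<noteq> y}. cut (sol x) R y z) = (\<Sum>z\<in>{z\<in>P. le x z \<and> le z y \<and> z \<noteq> y}. sol x z)"
        if "y \<in> P" using that by (intro sum.cong refl) (simp add: cut_apply R_def)
      then show ?thesis unfolding H_def by simp
    qed
    finally show "sol x y = (if x \<in> P \<and> y \<in> P \<and> le x y then
         (if x = y then 1 else - (\<Sum>z\<in>{z\<in>P. le x z \<and> le z y \<and> z \<noteq> y}. sol x z))
       else 0)" unfolding H_def .
  qed
  have uniq: "f = sol" if "?Q f" for f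
  proof (intro ext)
    fix x y
    show "f x y = sol x y"
    proof (induction y rule: wf_induct[OF wfR])
      case (1 y)
      have "f x y = H x (f x) y" unfolding H_def by (rule that[rule_format])
      also have "\<dots> = H x (sol x) y"
      proof -
        have "(\<Sum>z\<in>{z\<in>P. le x z \<and> le z y \<and> z \<noteq> y}. f x z) = (\<Sum>z\<in>{z\<in>P. le x z \<and> le z y \<and> z \<noteq> y}. sol x z)"
          if "y \<in> P" using that 1 by (intro sum.cong refl) (simp add: R_def)
        then show ?thesis unfolding H_def by simp
      qed
      also have "\<dots> = sol x y" unfolding H_def by (rule ex[rule_format, symmetric])
      finally show ?case .
    qed
  qed
  have "moebius P le = sol" unfolding moebius_def
    by (rule the_equality) (use ex uniq in \<open>blast+\<close>)
  then show ?thesis using ex by simp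
qed


definition key :: "'a set set \<Rightarrow> 'a set option" where
  "key F = (if F = {} then None else Some (\<Union>F))"

fun rnk :: "'a set option \<Rightarrow> nat" where
  "rnk None = 0" | "rnk (Some X) = Suc (card X)"

lemma lat_E_finite: "finite N \<Longrightarrow> finite (lat_E N)"
proof -
  assume "finite N"
  have "lat_E N = insert None ((\<lambda>F. Some (\<Union>F)) ` {F. F \<subseteq> N \<and> F \<noteq> {}})"
    unfolding lat_E_def by auto
  then show ?thesis using \<open>finite N\<close> by simp
qed

lemma key_in_lat: "F \<subseteq> N \<Longrightarrow> key F \<in> lat_E N"
  unfolding key_def lat_E_def by auto

lemma lat_val_finite: "finite N \<Longrightarrow> \<forall>X\<in>N. finite X \<Longrightarrow> y \<in> lat_E N \<Longrightarrow> finite (lat_val y)"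
proof -
  assume a: "finite N" "\<forall>X\<in>N. finite X" "y \<in> lat_E N"
  show ?thesis
  proof (cases y)
    case (Some Y)
    then obtain F where "F \<subseteq> N" "Y = \<Union>F" using a(3) unfolding lat_E_def by auto
    then show ?thesis using a(1,2) Some by (metis finite_Union finite_subset lat_val.simps(2) subsetD)
  qed simp
qed

lemma lat_rk:
  assumes "finite N" "\<forall>X\<in>N. finite X"
  shows "z \<in> lat_E N \<Longrightarrow> y \<in> lat_E N \<Longrightarrow> lat_le z y \<Longrightarrow> z \<noteq> y \<Longrightarrow> rnk z < rnk y"
proof -
  assume a: "z \<in> lat_E N" "y \<in> lat_E N" "lat_le z y" "z \<noteq> y"
  show "rnk z < rnk y"
  proof (cases z)
    case None
    then show ?thesis using a by (cases y) auto
  next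
    case (Some Z)
    then obtain Y where Y: "y = Some Y" using a by (cases y) auto
    have "finite Y" using lat_val_finite[OF assms a(2)] Y by simp
    moreover have "Z \<subset> Y" using a Some Y by auto
    ultimately show ?thesis using Some Y by (simp add: psubset_card_mono)
  qed
qed

lemma crosscut:
  assumes fin: "finite N" "\<forall>X\<in>N. finite X"
  shows "y \<in> lat_E N \<Longrightarrow> moebius (lat_E N) lat_le None y = (\<Sum>F\<in>{F\<in>Pow N. key F = y}. (-1::int) ^ card F)"
proof (induction "rnk y" arbitrary: y rule: less_induct)
  case less
  note mrec = moebius_rec[of "lat_E N" lat_le rnk, OF lat_rk[OF fin]]
  have NoneL: "None \<in> lat_E N" unfolding lat_E_def by simp
  show ?case
  proof (cases y)
    case None
    have "{F\<in>Pow N. key F = None} = {{}}" by (auto simp: key_def)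
    then show ?thesis using mrec[of None None] NoneL None by simp
  next
    case (Some Y)
    let ?c = "\<lambda>z. (\<Sum>F\<in>{F\<in>Pow N. key F = z}. (-1::int) ^ card F)"
    let ?T = "{z\<in>lat_E N. lat_le z y}"
    have finL: "finite (lat_E N)" using lat_E_finite fin by blast
    have m: "moebius (lat_E N) lat_le None y = - (\<Sum>z\<in>{z\<in>lat_E N. lat_le None z \<and> lat_le z y \<and> z \<noteq> y}. ?c z)"
    proof -
      have "moebius (lat_E N) lat_le None y = - (\<Sum>z\<in>{z\<in>lat_E N. lat_le None z \<and> lat_le z y \<and> z \<noteq> y}. moebius (lat_E N) lat_le None z)"
        using mrec[of None y] NoneL less.prems Some by simp
      also have "\<dots> = - (\<Sum>z\<in>{z\<in>lat_E N. lat_le None z \<and> lat_le z y \<and> z \<noteq> y}. ?c z)"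
        using less.hyps lat_rk[OF fin _ less.prems] by (intro arg_cong[where f=uminus] sum.cong) auto
      finally show ?thesis .
    qed
    have "(\<Sum>z\<in>?T. ?c z) = (\<Sum>F\<in>{F\<in>Pow N. lat_le (key F) y}. (-1::int) ^ card F)"
    proof -
      have "(\<Sum>z\<in>?T. ?c z) = (\<Sum>z\<in>?T. \<Sum>F\<in>{F\<in>{F\<in>Pow N. lat_le (key F) y}. key F = z}. (-1::int) ^ card F)"
        by (intro sum.cong) auto
      also have "\<dots> = (\<Sum>F\<in>{F\<in>Pow N. lat_le (key F) y}. (-1::int) ^ card F)"
        by (rule sum.group) (use fin finL key_in_lat in auto)
      finally show ?thesis .
    qed
    also have "{F\<in>Pow N. lat_le (key F) y} = Pow {X\<in>N. X \<subseteq> Y}"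
      using Some by (auto simp: key_def)
    also have "(\<Sum>F\<in>Pow {X\<in>N. X \<subseteq> Y}. (-1::int) ^ card F) = 0"
    proof -
      obtain F0 where "F0 \<subseteq> N" "F0 \<noteq> {}" "Y = \<Union>F0" using less.prems Some unfolding lat_E_def by auto
      then have "{X\<in>N. X \<subseteq> Y} \<noteq> {}" by auto
      then show ?thesis using fin by (simp add: alt_pow)
    qed
    finally have s0: "(\<Sum>z\<in>?T. ?c z) = 0" .
    have "(\<Sum>z\<in>?T. ?c z) = ?c y + (\<Sum>z\<in>?T - {y}. ?c z)"
      using finL less.prems Some by (subst sum.remove[of _ y]) auto
    moreover have "?T - {y} = {z\<in>lat_E N. lat_le None z \<and> lat_le z y \<and> z \<noteq> y}" by auto
    ultimately show ?thesis using m s0 by simp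
  qed
qed

lemma moebius_sum:
  assumes fin: "finite N" "\<forall>X\<in>N. finite X" and Y: "Y \<subseteq> lat_E N"
  shows "(\<Sum>y\<in>Y. moebius (lat_E N) lat_le None y * \<phi> y)
       = (\<Sum>F\<in>{F\<in>Pow N. key F \<in> Y}. (-1::int) ^ card F * \<phi> (key F))"
proof -
  have finL: "finite (lat_E N)" using lat_E_finite fin by blast
  have "(\<Sum>y\<in>Y. moebius (lat_E N) lat_le None y * \<phi> y)
      = (\<Sum>y\<in>Y. \<Sum>F\<in>{F\<in>{F\<in>Pow N. key F \<in> Y}. key F = y}. (-1::int) ^ card F * \<phi> (key F))"
  proof (rule sum.cong)
    fix y assume y: "y \<in> Y"
    then have "moebius (lat_E N) lat_le None y * \<phi> y = (\<Sum>F\<in>{F\<in>Pow N. key F = y}. (-1::int) ^ card F) * \<phi> y"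
      using crosscut[OF fin] Y by auto
    also have "\<dots> = (\<Sum>F\<in>{F\<in>Pow N. key F = y}. (-1::int) ^ card F * \<phi> (key F))"
      by (simp add: sum_distrib_right)
    also have "{F\<in>Pow N. key F = y} = {F\<in>{F\<in>Pow N. key F \<in> Y}. key F = y}" using y by auto
    finally show "moebius (lat_E N) lat_le None y * \<phi> y = (\<Sum>F\<in>{F\<in>{F\<in>Pow N. key F \<in> Y}. key F = y}. (-1::int) ^ card F * \<phi> (key F))" .
  qed simp
  also have "\<dots> = (\<Sum>F\<in>{F\<in>Pow N. key F \<in> Y}. (-1::int) ^ card F * \<phi> (key F))"
    by (rule sum.group) (use fin finL Y finite_subset in auto)
  finally show ?thesis .
qed


definition Fm :: "nat \<Rightarrow> nat \<Rightarrow> nat \<Rightarrow> nat" where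
  "Fm s p m = (\<Sum>j=0..m. (s choose j) * (p choose (m - j)) * 2 ^ (m - j))"

lemma Fm_0: "Fm s p 0 = 1" by (simp add: Fm_def)

lemma Fm_00: "Fm 0 0 (Suc m) = 0"
  unfolding Fm_def by (rule sum.neutral) auto

lemma Fm_R1: "Fm (Suc s) p (Suc m) = Fm s p (Suc m) + Fm s p m"
proof -
  let ?c = "\<lambda>i. (p choose i) * 2 ^ i"
  have e1: "Fm (Suc s) p (Suc m) = ?c (Suc m) + (\<Sum>j=Suc 0..Suc m. (Suc s choose j) * ?c (Suc m - j))"
    unfolding Fm_def by (subst sum.atLeast_Suc_atMost[OF le0]) (simp add: mult.assoc)
  have e2: "Fm s p (Suc m) = ?c (Suc m) + (\<Sum>j=Suc 0..Suc m. (s choose j) * ?c (Suc m - j))"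
    unfolding Fm_def by (subst sum.atLeast_Suc_atMost[OF le0]) (simp add: mult.assoc)
  have e3: "(\<Sum>j=Suc 0..Suc m. (Suc s choose j) * ?c (Suc m - j))
      = (\<Sum>j=Suc 0..Suc m. (s choose j) * ?c (Suc m - j)) + (\<Sum>j=Suc 0..Suc m. (s choose (j - 1)) * ?c (Suc m - j))"
  proof (subst sum.distrib[symmetric], rule sum.cong)
    fix j assume "j \<in> {Suc 0..Suc m}"
    then obtain i where "j = Suc i" by (cases j) auto
    then show "(Suc s choose j) * ?c (Suc m - j) = (s choose j) * ?c (Suc m - j) + (s choose (j - 1)) * ?c (Suc m - j)"
      by (simp add: algebra_simps)
  qed simp
  have e4: "(\<Sum>j=Suc 0..Suc m. (s choose (j - 1)) * ?c (Suc m - j)) = Fm s p m"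
    unfolding sum.shift_bounds_cl_Suc_ivl Fm_def by (simp add: mult.assoc)
  show ?thesis using e1 e2 e3 e4 by simp
qed

lemma Fm_R2_pt:
  assumes "j \<le> m"
  shows "(s choose j) * (Suc p choose (Suc m - j)) * 2 ^ (Suc m - j)
       = (s choose j) * (p choose (Suc m - j)) * 2 ^ (Suc m - j) + 2 * ((s choose j) * (p choose (m - j)) * 2 ^ (m - j))"
proof -
  have e: "Suc m - j = Suc (m - j)" using assms by simp
  show ?thesis unfolding e by (simp add: algebra_simps)
qed

lemma Fm_R2: "Fm s (Suc p) (Suc m) = Fm s p (Suc m) + 2 * Fm s p m"
proof -
  let ?g1 = "\<lambda>j. (s choose j) * (Suc p choose (Suc m - j)) * 2 ^ (Suc m - j)"
  let ?g2 = "\<lambda>j. (s choose j) * (p choose (Suc m - j)) * 2 ^ (Suc m - j)"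
  let ?g3 = "\<lambda>j. (s choose j) * (p choose (m - j)) * 2 ^ (m - j)"
  have e1: "Fm s (Suc p) (Suc m) = (\<Sum>j=0..m. ?g1 j) + (s choose Suc m)"
    unfolding Fm_def sum.atLeast0_atMost_Suc by simp
  have e2: "Fm s p (Suc m) = (\<Sum>j=0..m. ?g2 j) + (s choose Suc m)"
    unfolding Fm_def sum.atLeast0_atMost_Suc by simp
  have e3: "Fm s p m = (\<Sum>j=0..m. ?g3 j)" unfolding Fm_def ..
  have e4: "(\<Sum>j=0..m. ?g1 j) = (\<Sum>j=0..m. ?g2 j + 2 * ?g3 j)"
    by (intro sum.cong refl Fm_R2_pt) simp
  have e5: "(\<Sum>j=0..m. ?g2 j + 2 * ?g3 j) = (\<Sum>j=0..m. ?g2 j) + 2 * (\<Sum>j=0..m. ?g3 j)"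
    by (simp only: sum.distrib sum_distrib_left)
  show ?thesis using e1 e2 e3 e4 e5 by linarith
qed


definition af :: "('a \<Rightarrow> 'a) \<Rightarrow> 'a set \<Rightarrow> nat \<Rightarrow> nat" where
  "af \<nu> X m = card {K. K \<subseteq> X \<and> card K = m \<and> (\<forall>x\<in>K. \<nu> x \<notin> K)}"

lemma card_split_insert:
  assumes "finite Y" "x \<notin> Y"
  shows "card {K. K \<subseteq> insert x Y \<and> card K = Suc m \<and> \<Phi> K}
       = card {K. K \<subseteq> Y \<and> card K = Suc m \<and> \<Phi> K} + card {K. K \<subseteq> Y \<and> card K = m \<and> \<Phi> (insert x K)}"
proof -
  let ?A = "{K. K \<subseteq> Y \<and> card K = Suc m \<and> \<Phi> K}"
  let ?B0 = "{K. K \<subseteq> Y \<and> card K = m \<and> \<Phi> (insert x K)}"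
  have eq: "{K. K \<subseteq> insert x Y \<and> card K = Suc m \<and> \<Phi> K} = ?A \<union> insert x ` ?B0"
  proof (rule set_eqI, rule iffI)
    fix K assume K: "K \<in> {K. K \<subseteq> insert x Y \<and> card K = Suc m \<and> \<Phi> K}"
    show "K \<in> ?A \<union> insert x ` ?B0"
    proof (cases "x \<in> K")
      case True
      have fK: "finite K" using K assms(1) finite_subset by auto
      have "K = insert x (K - {x})" using True by auto
      moreover have "K - {x} \<in> ?B0" using K True fK \<open>K = insert x (K - {x})\<close> by (auto simp: card_Diff_singleton)
      ultimately show ?thesis by blast
    next
      case False
      then show ?thesis using K by auto
    qed
  next
    fix K assume "K \<in> ?A \<union> insert x ` ?B0"
    then show "K \<in> {K. K \<subseteq> insert x Y \<and> card K = Suc m \<and> \<Phi> K}"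
    proof
      assume "K \<in> ?A" then show ?thesis by auto
    next
      assume "K \<in> insert x ` ?B0"
      then obtain K0 where "K0 \<in> ?B0" "K = insert x K0" by blast
      moreover have "finite K0" "x \<notin> K0" using \<open>K0 \<in> ?B0\<close> assms finite_subset by auto
      ultimately show ?thesis by auto
    qed
  qed
  have disj: "?A \<inter> insert x ` ?B0 = {}" using assms(2) by auto
  have finA: "finite ?A" using assms(1) by (rule finite_subset[rotated, OF finite_Pow_iff[THEN iffD2]]) auto
  have finB: "finite ?B0" using assms(1) by (rule finite_subset[rotated, OF finite_Pow_iff[THEN iffD2]]) auto
  have inj: "inj_on (insert x) ?B0"
    unfolding inj_on_def using assms(2) by (metis (no_types, lifting) insert_ident mem_Collect_eq subsetD)
  show ?thesis unfolding eq
    by (subst card_Un_disjoint) (use finA finB disj inj in \<open>auto simp: card_image\<close>)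
qed

lemma af_0: "finite X \<Longrightarrow> af \<nu> X 0 = 1"
proof -
  assume "finite X"
  have "{K. K \<subseteq> X \<and> card K = 0 \<and> (\<forall>x\<in>K. \<nu> x \<notin> K)} = {{}}"
    using \<open>finite X\<close> by (auto simp: card_eq_0_iff rev_finite_subset)
  then show ?thesis unfolding af_def by simp
qed

lemma af_empty: "af \<nu> {} (Suc m) = 0"
  unfolding af_def by auto

lemma af_rec1:
  assumes inv: "\<forall>y\<in>T. \<nu> y \<in> T \<and> \<nu> (\<nu> y) = y \<and> \<nu> y \<noteq> y"
    and X: "X \<subseteq> T" "finite X" "x \<in> X" "\<nu> x \<notin> X"
  shows "af \<nu> X (Suc m) = af \<nu> (X - {x}) (Suc m) + af \<nu> (X - {x}) m"
proof -
  have XI: "X = insert x (X - {x})" using X by auto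
  have "af \<nu> X (Suc m) = card {K. K \<subseteq> insert x (X - {x}) \<and> card K = Suc m \<and> (\<forall>y\<in>K. \<nu> y \<notin> K)}"
    unfolding af_def using XI by simp
  also have "\<dots> = af \<nu> (X - {x}) (Suc m) + card {K. K \<subseteq> X - {x} \<and> card K = m \<and> (\<forall>y\<in>insert x K. \<nu> y \<notin> insert x K)}"
    unfolding af_def by (rule card_split_insert) (use X in auto)
  also have "{K. K \<subseteq> X - {x} \<and> card K = m \<and> (\<forall>y\<in>insert x K. \<nu> y \<notin> insert x K)}
      = {K. K \<subseteq> X - {x} \<and> card K = m \<and> (\<forall>y\<in>K. \<nu> y \<notin> K)}"
  proof -
    have "(\<forall>y\<in>insert x K. \<nu> y \<notin> insert x K) = (\<forall>y\<in>K. \<nu> y \<notin> K)" if "K \<subseteq> X - {x}" for K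
    proof -
      have "\<nu> x \<notin> insert x K" using that X by auto
      moreover have "\<nu> y \<noteq> x" if "y \<in> K" for y
        using that \<open>K \<subseteq> X - {x}\<close> X inv by (metis Diff_iff subsetD)
      ultimately show ?thesis by auto
    qed
    then show ?thesis by (intro Collect_cong conj_cong refl) simp_all
  qed
  finally show ?thesis unfolding af_def by simp
qed

lemma af_rec2:
  assumes inv: "\<forall>y\<in>T. \<nu> y \<in> T \<and> \<nu> (\<nu> y) = y \<and> \<nu> y \<noteq> y"
    and X: "X \<subseteq> T" "finite X" "x \<in> X" "\<nu> x \<in> X"
  shows "af \<nu> X (Suc m) = af \<nu> (X - {x, \<nu> x}) (Suc m) + 2 * af \<nu> (X - {x, \<nu> x}) m"
proof -
  let ?Y = "X - {x, \<nu> x}"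
  let ?Phi = "\<lambda>K. \<forall>y\<in>K. \<nu> y \<notin> K"
  have nx: "\<nu> x \<noteq> x" "\<nu> (\<nu> x) = x" using inv X by auto
  have XI: "X = insert x (insert (\<nu> x) ?Y)" using X by auto
  have fY: "finite ?Y" "finite (insert (\<nu> x) ?Y)" using X by auto
  have "af \<nu> X (Suc m) = card {K. K \<subseteq> insert x (insert (\<nu> x) ?Y) \<and> card K = Suc m \<and> ?Phi K}"
    unfolding af_def using XI by simp
  also have "\<dots> = card {K. K \<subseteq> insert (\<nu> x) ?Y \<and> card K = Suc m \<and> ?Phi K}
      + card {K. K \<subseteq> insert (\<nu> x) ?Y \<and> card K = m \<and> ?Phi (insert x K)}"
    by (rule card_split_insert) (use fY nx in auto)
  also have "card {K. K \<subseteq> insert (\<nu> x) ?Y \<and> card K = Suc m \<and> ?Phi K}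
      = af \<nu> ?Y (Suc m) + card {K. K \<subseteq> ?Y \<and> card K = m \<and> ?Phi (insert (\<nu> x) K)}"
    unfolding af_def by (rule card_split_insert) (use fY in auto)
  also have "{K. K \<subseteq> ?Y \<and> card K = m \<and> ?Phi (insert (\<nu> x) K)} = {K. K \<subseteq> ?Y \<and> card K = m \<and> ?Phi K}"
  proof -
    have "?Phi (insert (\<nu> x) K) = ?Phi K" if "K \<subseteq> ?Y" for K
    proof -
      have "\<nu> (\<nu> x) \<notin> insert (\<nu> x) K" using that nx by auto
      moreover have "\<nu> y \<noteq> \<nu> x" if "y \<in> K" for y
      proof -
        have yT: "y \<in> T" "y \<noteq> x" using that \<open>K \<subseteq> ?Y\<close> X by auto
        have "\<nu> (\<nu> y) = y" using inv yT by blast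
        then show ?thesis using nx yT(2) by auto
      qed
      ultimately show ?thesis by auto
    qed
    then show ?thesis by (intro Collect_cong conj_cong refl) simp_all
  qed
  also have "{K. K \<subseteq> insert (\<nu> x) ?Y \<and> card K = m \<and> ?Phi (insert x K)} = {K. K \<subseteq> ?Y \<and> card K = m \<and> ?Phi K}"
  proof -
    have "(K \<subseteq> insert (\<nu> x) ?Y \<and> ?Phi (insert x K)) = (K \<subseteq> ?Y \<and> ?Phi K)" for K
    proof
      assume a: "K \<subseteq> insert (\<nu> x) ?Y \<and> ?Phi (insert x K)"
      then have "\<nu> x \<notin> K" by auto
      then have "K \<subseteq> ?Y" using a by auto
      then show "K \<subseteq> ?Y \<and> ?Phi K" using a by auto
    next
      assume a: "K \<subseteq> ?Y \<and> ?Phi K"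
      have "\<nu> y \<noteq> x" if "y \<in> K" for y
      proof -
        have yT: "y \<in> T" "y \<noteq> \<nu> x" using that a X by auto
        have "\<nu> (\<nu> y) = y" using inv yT by blast
        then show ?thesis using yT(2) by auto
      qed
      moreover have "\<nu> x \<notin> insert x K" using a nx by auto
      ultimately show "K \<subseteq> insert (\<nu> x) ?Y \<and> ?Phi (insert x K)" using a by auto
    qed
    note eqK = this
    show ?thesis
    proof (rule Collect_cong)
      fix K show "(K \<subseteq> insert (\<nu> x) ?Y \<and> card K = m \<and> ?Phi (insert x K)) = (K \<subseteq> ?Y \<and> card K = m \<and> ?Phi K)"
        using eqK[of K] by blast
    qed
  qed
  finally show ?thesis unfolding af_def by simp
qed

definition Dn :: "('a \<Rightarrow> 'a) \<Rightarrow> 'a set \<Rightarrow> 'a set" where "Dn \<nu> X = {y\<in>X. \<nu> y \<notin> X}"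
definition Pr :: "('a \<Rightarrow> 'a) \<Rightarrow> 'a set \<Rightarrow> 'a set" where "Pr \<nu> X = {y\<in>X. \<nu> y \<in> X}"

lemma af_formula:
  assumes inv: "\<forall>y\<in>T. \<nu> y \<in> T \<and> \<nu> (\<nu> y) = y \<and> \<nu> y \<noteq> y" and fT: "finite T"
  shows "X \<subseteq> T \<Longrightarrow> even (card (Pr \<nu> X)) \<and> (\<forall>m. af \<nu> X m = Fm (card (Dn \<nu> X)) (card (Pr \<nu> X) div 2) m)"
proof (induction "card X" arbitrary: X rule: less_induct)
  case less
  have fX: "finite X" using less.prems fT finite_subset by auto
  have invX1: "\<And>y. y \<in> X \<Longrightarrow> \<nu> (\<nu> y) = y" and invX2: "\<And>y. y \<in> X \<Longrightarrow> \<nu> y \<noteq> y"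
    using inv less.prems by auto
  show ?case
  proof (cases "X = {}")
    case True
    then show ?thesis
      by (auto simp: Dn_def Pr_def af_0 Fm_0 af_empty Fm_00 intro: nat.induct[where P="\<lambda>m. af \<nu> {} m = Fm 0 0 m"])
  next
    case False
    then obtain x where x: "x \<in> X" by blast
    have nx: "\<nu> x \<in> T" "\<nu> (\<nu> x) = x" "\<nu> x \<noteq> x" using inv x less.prems by auto
    show ?thesis
    proof (cases "\<nu> x \<in> X")
      case False
      let ?X = "X - {x}"
      have lt: "card ?X < card X" using x fX by (rule card_Diff1_less[rotated])
      have IH: "even (card (Pr \<nu> ?X)) \<and> (\<forall>m. af \<nu> ?X m = Fm (card (Dn \<nu> ?X)) (card (Pr \<nu> ?X) div 2) m)"
        using less.hyps[OF lt] less.prems by auto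
      have P: "Pr \<nu> ?X = Pr \<nu> X"
        unfolding Pr_def using False x invX1 by auto
      have Dd: "Dn \<nu> X = insert x (Dn \<nu> ?X)" "x \<notin> Dn \<nu> ?X"
        unfolding Dn_def using False x invX1 invX2 by auto
      have fD: "finite (Dn \<nu> ?X)" unfolding Dn_def using fX by simp
      have cD: "card (Dn \<nu> X) = Suc (card (Dn \<nu> ?X))" using Dd fD by simp
      have "af \<nu> X m = Fm (card (Dn \<nu> X)) (card (Pr \<nu> X) div 2) m" for m
      proof (cases m)
        case 0 then show ?thesis using fX by (simp add: af_0 Fm_0)
      next
        case (Suc m')
        then show ?thesis using af_rec1[OF inv less.prems fX x False] IH P cD by (simp add: Fm_R1)
      qed
      then show ?thesis using IH P by simp
    next
      case True
      let ?X = "X - {x, \<nu> x}"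
      have lt: "card ?X < card X" using x fX by (intro psubset_card_mono) auto
      have IH: "even (card (Pr \<nu> ?X)) \<and> (\<forall>m. af \<nu> ?X m = Fm (card (Dn \<nu> ?X)) (card (Pr \<nu> ?X) div 2) m)"
        using less.hyps[OF lt] less.prems by auto
      have D: "Dn \<nu> ?X = Dn \<nu> X"
        unfolding Dn_def using True x nx invX1 invX2 by (auto; metis invX1)
      have Pd: "Pr \<nu> X = insert x (insert (\<nu> x) (Pr \<nu> ?X))"
        unfolding Pr_def using True x nx invX1 invX2 by (auto; metis invX1)
      have Pd2: "x \<notin> Pr \<nu> ?X" "\<nu> x \<notin> Pr \<nu> ?X" unfolding Pr_def by simp_all
      have fP: "finite (Pr \<nu> ?X)" unfolding Pr_def using fX by simp
      have cP: "card (Pr \<nu> X) = Suc (Suc (card (Pr \<nu> ?X)))" using Pd Pd2 fP nx by simp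
      have ev: "even (card (Pr \<nu> X))" using cP IH by simp
      have cP2: "card (Pr \<nu> X) div 2 = Suc (card (Pr \<nu> ?X) div 2)" using cP IH by presburger
      have "af \<nu> X m = Fm (card (Dn \<nu> X)) (card (Pr \<nu> X) div 2) m" for m
      proof (cases m)
        case 0 then show ?thesis using fX by (simp add: af_0 Fm_0)
      next
        case (Suc m')
        then show ?thesis using af_rec2[OF inv less.prems fX x True] IH D cP2 by (simp add: Fm_R2)
      qed
      then show ?thesis using ev by simp
    qed
  qed
qed


lemma neg_sign_inv[simp]: "neg_sign (neg_sign s) = s" by (cases s) auto
lemma sv_neg_inv[simp]: "sv_neg (sv_neg X) = X" unfolding sv_neg_def by simp
lemma neg_sign_Pos[simp]: "(neg_sign s = Pos) = (s = Neg)" by (cases s) auto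
lemma neg_sign_Neg[simp]: "(neg_sign s = Neg) = (s = Pos)" by (cases s) auto
lemma neg_sign_Zero[simp]: "(neg_sign s = Zero) = (s = Zero)" by (cases s) auto

lemma UNIV_sign: "(UNIV :: sign set) = {Pos, Neg, Zero}"
  by (auto intro: sign.exhaust)

lemma finite_sv_on: "finite {X. sv_on t X}"
proof -
  have "{X. sv_on t X} = {f. \<forall>x. (x \<in> {1..t} \<longrightarrow> f x \<in> (UNIV::sign set)) \<and> (x \<notin> {1..t} \<longrightarrow> f x = Zero)}"
    unfolding sv_on_def by auto
  then show ?thesis using finite_set_of_finite_funs[of "{1..t}" "UNIV::sign set" Zero] by (simp add: UNIV_sign)
qed

lemma om_axioms: "oriented_matroid t L \<Longrightarrow> (\<forall>X\<in>L. sv_on t X) \<and> (\<forall>X\<in>L. sv_neg X \<in> L) \<and> (\<forall>X\<in>L. \<forall>Y\<in>L. sv_comp X Y \<in> L)"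
  unfolding oriented_matroid_def by (elim conjE) (intro conjI; assumption)

lemma om_sv_on: "oriented_matroid t L \<Longrightarrow> X \<in> L \<Longrightarrow> sv_on t X"
  using om_axioms by blast
lemma om_neg: "oriented_matroid t L \<Longrightarrow> X \<in> L \<Longrightarrow> sv_neg X \<in> L"
  using om_axioms by blast
lemma om_comp: "oriented_matroid t L \<Longrightarrow> X \<in> L \<Longrightarrow> Y \<in> L \<Longrightarrow> sv_comp X Y \<in> L"
  using om_axioms by blast

lemma om_finite: "oriented_matroid t L \<Longrightarrow> finite L"
proof -
  assume "oriented_matroid t L"
  then have "L \<subseteq> {X. sv_on t X}" using om_sv_on by blast
  then show ?thesis using finite_sv_on by (rule finite_subset)
qed

lemma topes_sub: "topes L \<subseteq> L" unfolding topes_def by auto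

lemma finite_topes: "oriented_matroid t L \<Longrightarrow> finite (topes L)"
  by (rule finite_subset[OF topes_sub om_finite])

lemma tope_nonzero:
  assumes om: "oriented_matroid t L" and s: "simple_om t L" and T: "T \<in> topes L" and e: "e \<in> {1..t}"
  shows "T e \<noteq> Zero"
proof
  assume z: "T e = Zero"
  have "\<forall>e\<in>{1..t}. \<exists>X\<in>L. X e \<noteq> Zero" using s unfolding simple_om_def by (rule conjunct1)
  then obtain X where X: "X \<in> L" "X e \<noteq> Zero" using e by blast
  have TL: "T \<in> L" using T topes_sub by auto
  have C: "sv_comp T X \<in> L" using om_comp[OF om TL X(1)] .
  have "sv_le T (sv_comp T X)" unfolding sv_le_def sv_comp_def by auto
  then have "sv_comp T X = T" using T C unfolding topes_def by blast
  then have "sv_comp T X e = T e" by simp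
  then show False using z X unfolding sv_comp_def by simp
qed

lemma tope_neg:
  assumes om: "oriented_matroid t L" and T: "T \<in> topes L"
  shows "sv_neg T \<in> topes L"
proof -
  have TL: "T \<in> L" using T topes_sub by auto
  have nL: "sv_neg T \<in> L" using om_neg[OF om TL] .
  have "Y = sv_neg T" if "Y \<in> L" "sv_le (sv_neg T) Y" for Y
  proof -
    have "sv_neg Y \<in> L" using om_neg[OF om that(1)] .
    moreover have "sv_le T (sv_neg Y)" unfolding sv_le_def sv_neg_def
    proof (intro allI impI)
      fix f assume "T f \<noteq> Zero"
      then have "neg_sign (T f) = Y f" using that(2) unfolding sv_le_def sv_neg_def by simp
      then have "neg_sign (neg_sign (T f)) = neg_sign (Y f)" by simp
      then show "T f = neg_sign (Y f)" by simp
    qed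
    ultimately have "sv_neg Y = T" using T unfolding topes_def by blast
    then show ?thesis by (metis sv_neg_inv)
  qed
  then show ?thesis using nL unfolding topes_def by blast
qed

lemma tope_sv_on: "oriented_matroid t L \<Longrightarrow> T \<in> topes L \<Longrightarrow> sv_on t T"
  using topes_sub om_sv_on by blast

lemma tope_neg_ne:
  assumes "oriented_matroid t L" "simple_om t L" "T \<in> topes L" "1 \<le> t"
  shows "sv_neg T \<noteq> T"
proof
  assume "sv_neg T = T"
  then have "neg_sign (T 1) = T 1" unfolding sv_neg_def by metis
  moreover have "T 1 \<noteq> Zero" using tope_nonzero assms by auto
  ultimately show False by (cases "T 1") auto
qed

lemma card_pos_half:
  assumes om: "oriented_matroid t L" and s: "simple_om t L" and e: "e \<in> {1..t}"
  shows "2 * card (topes_pos (topes L) e) = card (topes L)" "topes_pos (topes L) e \<subseteq> topes L"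
    "2 * card (topes_neg (topes L) e) = card (topes L)" "topes_neg (topes L) e \<subseteq> topes L"
proof -
  let ?P = "topes_pos (topes L) e" and ?N = "topes_neg (topes L) e"
  have fin: "finite (topes L)" using finite_topes om by blast
  have negv: "(sv_neg T) e = neg_sign (T e)" for T unfolding sv_neg_def by simp
  have im: "sv_neg ` ?P = ?N"
  proof
    show "sv_neg ` ?P \<subseteq> ?N"
    proof
      fix T' assume "T' \<in> sv_neg ` ?P"
      then obtain T where "T \<in> ?P" "T' = sv_neg T" by blast
      then show "T' \<in> ?N" unfolding topes_pos_def topes_neg_def using tope_neg[OF om] negv by simp
    qed
    show "?N \<subseteq> sv_neg ` ?P"
    proof
      fix T assume T: "T \<in> ?N"
      then have "sv_neg T \<in> ?P" unfolding topes_pos_def topes_neg_def using tope_neg[OF om] negv by simp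
      moreover have "T = sv_neg (sv_neg T)" by simp
      ultimately show "T \<in> sv_neg ` ?P" by blast
    qed
  qed
  have inj: "inj sv_neg" by (metis injI sv_neg_inv)
  have c: "card ?N = card ?P" using im card_image[OF inj_on_subset[OF inj subset_UNIV]] by metis
  have "T e = Pos \<or> T e = Neg" if "T \<in> topes L" for T
    using tope_nonzero[OF om s that e] by (cases "T e") auto
  then have un: "?P \<union> ?N = topes L" unfolding topes_pos_def topes_neg_def by auto
  have dj: "?P \<inter> ?N = {}" unfolding topes_pos_def topes_neg_def by auto
  have "card ?P + card ?N = card (topes L)"
    using card_Un_disjoint[of ?P ?N] fin un dj by (metis finite_Un)
  then show "2 * card ?P = card (topes L)" "2 * card ?N = card (topes L)" using c by auto
  show "?P \<subseteq> topes L" "?N \<subseteq> topes L" unfolding topes_pos_def topes_neg_def by auto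
qed


definition comm :: "nat \<Rightarrow> sv set \<Rightarrow> (nat \<Rightarrow> sv set) \<Rightarrow> nat \<Rightarrow> (sv set \<Rightarrow> bool) \<Rightarrow> nat" where
  "comm t TT S k \<Phi> = card {K. K \<subseteq> TT \<and> card K = k \<and> (\<forall>e\<in>{1..t}. k < 2 * card (K \<inter> S e)) \<and> \<Phi> K}"

definition afree :: "sv set \<Rightarrow> bool" where "afree K = (\<forall>T\<in>K. sv_neg T \<notin> K)"

lemma kappa_comm:
  assumes fin: "finite TT" and k: "k < card TT"
  shows "kappa_star t k TT = comm t TT (topes_pos TT) k (\<lambda>_. True)"
    "kappa_ring t k TT = comm t TT (topes_pos TT) k afree"
proof -
  have eq: "(tope_committee t TT K \<and> card K = k) = (K \<subseteq> TT \<and> card K = k \<and> (\<forall>e\<in>{1..t}. k < 2 * card (K \<inter> topes_pos TT e)))" for K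
  proof
    assume a: "tope_committee t TT K \<and> card K = k"
    then have sub: "K \<subseteq> TT" unfolding tope_committee_def by auto
    then have "{T\<in>K. T e = Pos} = K \<inter> topes_pos TT e" for e unfolding topes_pos_def by auto
    then show "K \<subseteq> TT \<and> card K = k \<and> (\<forall>e\<in>{1..t}. k < 2 * card (K \<inter> topes_pos TT e))"
      using a sub unfolding tope_committee_def by auto
  next
    assume a: "K \<subseteq> TT \<and> card K = k \<and> (\<forall>e\<in>{1..t}. k < 2 * card (K \<inter> topes_pos TT e))"
    then have "K \<noteq> TT" using k by auto
    then have "K \<subset> TT" using a by auto
    moreover have "{T\<in>K. T e = Pos} = K \<inter> topes_pos TT e" for e using a unfolding topes_pos_def by auto
    ultimately show "tope_committee t TT K \<and> card K = k" using a unfolding tope_committee_def by auto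
  qed
  show "kappa_star t k TT = comm t TT (topes_pos TT) k (\<lambda>_. True)"
    unfolding kappa_star_def comm_def using eq by simp
  have eq2: "(tope_committee t TT K \<and> card K = k \<and> (\<forall>T\<in>K. sv_neg T \<notin> K)) =
     (K \<subseteq> TT \<and> card K = k \<and> (\<forall>e\<in>{1..t}. k < 2 * card (K \<inter> topes_pos TT e)) \<and> afree K)" for K
    using eq[of K] unfolding afree_def by blast
  show "kappa_ring t k TT = comm t TT (topes_pos TT) k afree"
    unfolding kappa_ring_def comm_def using eq2 by simp
qed

definition phi :: "nat \<Rightarrow> sv \<Rightarrow> sv" where "phi a T = T(a := neg_sign (T a))"

lemma phi_inv[simp]: "phi a (phi a T) = T" unfolding phi_def by auto
lemma phi_inj: "inj (phi a)" by (metis injI phi_inv)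
lemma phi_neg: "sv_neg (phi a T) = phi a (sv_neg T)" unfolding phi_def sv_neg_def by auto
lemma phi_img_inv[simp]: "phi a ` phi a ` A = A" by (simp add: image_comp comp_def)

definition Sre :: "sv set \<Rightarrow> nat \<Rightarrow> nat \<Rightarrow> sv set" where
  "Sre TT a e = (if e = a then topes_neg TT a else topes_pos TT e)"

lemma phi_pos: "K \<subseteq> TT \<Longrightarrow> {T\<in>phi a ` K. T e = Pos} = phi a ` (K \<inter> Sre TT a e)"
proof -
  assume K: "K \<subseteq> TT"
  have v: "(phi a T) e = Pos \<longleftrightarrow> (if e = a then T a = Neg else T e = Pos)" for T
    unfolding phi_def by auto
  show ?thesis
  proof
    show "{T\<in>phi a ` K. T e = Pos} \<subseteq> phi a ` (K \<inter> Sre TT a e)"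
      using K v unfolding Sre_def topes_pos_def topes_neg_def by (auto split: if_splits)
    show "phi a ` (K \<inter> Sre TT a e) \<subseteq> {T\<in>phi a ` K. T e = Pos}"
      using K v unfolding Sre_def topes_pos_def topes_neg_def by (auto split: if_splits)
  qed
qed

lemma reorient_comm:
  assumes fin: "finite TT" and k: "k < card TT"
  shows "kappa_star t k (reorient_topes a TT) = comm t TT (Sre TT a) k (\<lambda>_. True)"
    "kappa_ring t k (reorient_topes a TT) = comm t TT (Sre TT a) k afree"
proof -
  have R: "reorient_topes a TT = phi a ` TT" unfolding reorient_topes_def phi_def by simp
  have injA: "inj_on (phi a) A" for A using phi_inj by (metis inj_on_subset subset_UNIV)
  have ci: "card (phi a ` X) = card X" for X by (rule card_image[OF injA])
  have cR: "card (phi a ` TT) = card TT" by (rule ci)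
  have gen: "card {K'. tope_committee t (phi a ` TT) K' \<and> card K' = k \<and> \<Psi> K'}
      = card {K. K \<subseteq> TT \<and> card K = k \<and> (\<forall>e\<in>{1..t}. k < 2 * card (K \<inter> Sre TT a e)) \<and> \<Psi> (phi a ` K)}" for \<Psi>
  proof -
    let ?C = "{K. K \<subseteq> TT \<and> card K = k \<and> (\<forall>e\<in>{1..t}. k < 2 * card (K \<inter> Sre TT a e)) \<and> \<Psi> (phi a ` K)}"
    have eqv: "(tope_committee t (phi a ` TT) (phi a ` K) \<and> card (phi a ` K) = k \<and> \<Psi> (phi a ` K))
        = (K \<subseteq> TT \<and> card K = k \<and> (\<forall>e\<in>{1..t}. k < 2 * card (K \<inter> Sre TT a e)) \<and> \<Psi> (phi a ` K))" for K
    proof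
      assume a: "tope_committee t (phi a ` TT) (phi a ` K) \<and> card (phi a ` K) = k \<and> \<Psi> (phi a ` K)"
      have "phi a ` K \<subseteq> phi a ` TT" using a unfolding tope_committee_def by auto
      then have sub: "K \<subseteq> TT" using phi_inj by (metis inj_image_subset_iff)
      have cK: "card K = k" using a ci by simp
      have "card {T\<in>phi a ` K. T e = Pos} = card (K \<inter> Sre TT a e)" for e
        using phi_pos[OF sub] ci by simp
      then show "K \<subseteq> TT \<and> card K = k \<and> (\<forall>e\<in>{1..t}. k < 2 * card (K \<inter> Sre TT a e)) \<and> \<Psi> (phi a ` K)"
        using a sub cK unfolding tope_committee_def by auto
    next
      assume a: "K \<subseteq> TT \<and> card K = k \<and> (\<forall>e\<in>{1..t}. k < 2 * card (K \<inter> Sre TT a e)) \<and> \<Psi> (phi a ` K)"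
      have cK: "card (phi a ` K) = k" using a ci by simp
      have "phi a ` K \<subseteq> phi a ` TT" using a by auto
      moreover have "phi a ` K \<noteq> phi a ` TT" using cK cR k by auto
      ultimately have "phi a ` K \<subset> phi a ` TT" by auto
      moreover have "card {T\<in>phi a ` K. T e = Pos} = card (K \<inter> Sre TT a e)" for e
        using phi_pos[of K TT] a ci by simp
      ultimately show "tope_committee t (phi a ` TT) (phi a ` K) \<and> card (phi a ` K) = k \<and> \<Psi> (phi a ` K)"
        using a cK unfolding tope_committee_def by auto
    qed
    have "{K'. tope_committee t (phi a ` TT) K' \<and> card K' = k \<and> \<Psi> K'} = image (phi a) ` ?C"
    proof
      show "{K'. tope_committee t (phi a ` TT) K' \<and> card K' = k \<and> \<Psi> K'} \<subseteq> image (phi a) ` ?C"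
      proof
        fix K' assume "K' \<in> {K'. tope_committee t (phi a ` TT) K' \<and> card K' = k \<and> \<Psi> K'}"
        then have "phi a ` K' \<in> ?C" using eqv[of "phi a ` K'"] by simp
        moreover have "K' = phi a ` (phi a ` K')" by simp
        ultimately show "K' \<in> image (phi a) ` ?C" by blast
      qed
      show "image (phi a) ` ?C \<subseteq> {K'. tope_committee t (phi a ` TT) K' \<and> card K' = k \<and> \<Psi> K'}"
        using eqv by blast
    qed
    moreover have "inj_on (image (phi a)) ?C"
      by (rule inj_onI) (metis phi_img_inv)
    ultimately show ?thesis by (simp add: card_image)
  qed
  show "kappa_star t k (reorient_topes a TT) = comm t TT (Sre TT a) k (\<lambda>_. True)"
    unfolding kappa_star_def comm_def R using gen[of "\<lambda>_. True"] by simp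
  have af: "(\<forall>T\<in>phi a ` K. sv_neg T \<notin> phi a ` K) = afree K" for K
  proof -
    have "(sv_neg (phi a T) \<in> phi a ` K) = (sv_neg T \<in> K)" for T
      unfolding phi_neg using phi_inj by (simp add: inj_image_mem_iff)
    then show ?thesis unfolding afree_def by auto
  qed
  show "kappa_ring t k (reorient_topes a TT) = comm t TT (Sre TT a) k afree"
    unfolding kappa_ring_def comm_def R using gen[of "\<lambda>K. \<forall>T\<in>K. sv_neg T \<notin> K"] af by simp
qed


lemma avoid_iff:
  assumes "finite S"
  shows "(\<forall>X\<in>subsets_of_card S h. X \<inter> K \<noteq> {}) = (card (S - K) < h)"
proof
  assume a: "\<forall>X\<in>subsets_of_card S h. X \<inter> K \<noteq> {}"
  show "card (S - K) < h"
  proof (rule ccontr)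
    assume "\<not> card (S - K) < h"
    then obtain X where "X \<subseteq> S - K" "card X = h" by (meson not_less obtain_subset_with_card_n)
    then have "X \<in> subsets_of_card S h" "X \<inter> K = {}" unfolding subsets_of_card_def by auto
    then show False using a by blast
  qed
next
  assume a: "card (S - K) < h"
  show "\<forall>X\<in>subsets_of_card S h. X \<inter> K \<noteq> {}"
  proof
    fix X assume X: "X \<in> subsets_of_card S h"
    show "X \<inter> K \<noteq> {}"
    proof
      assume "X \<inter> K = {}"
      then have "X \<subseteq> S - K" using X unfolding subsets_of_card_def by auto
      then have "card X \<le> card (S - K)" using assms by (intro card_mono) auto
      then show False using X a unfolding subsets_of_card_def by auto
    qed
  qed
qed

lemma arith_h:
  fixes m c k :: nat
  assumes "c \<le> m" "c \<le> k" "2 * k \<le> 2 * m"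
  shows "(m - c < (2 * m - k + 1) div 2) = (k < 2 * c)"
proof -
  have d: "(2 * m - k + 1) div 2 = m - k div 2"
  proof (cases "even k")
    case True then obtain q where "k = 2 * q" by (auto elim: evenE)
    then show ?thesis using assms by simp
  next
    case False then obtain q where "k = 2 * q + 1" by (auto elim: oddE)
    then show ?thesis using assms by simp
  qed
  have "(k div 2 < c) = (k < 2 * c)" by auto
  then show ?thesis unfolding d using assms by auto
qed

lemma comm_IE:
  assumes fin: "finite TT"
    and S: "\<forall>e\<in>{1..t}. S e \<subseteq> TT \<and> 2 * card (S e) = card TT"
    and k: "2 * k \<le> card TT"
  shows "int (comm t TT S k \<Phi>) = (\<Sum>F\<in>Pow (\<Union>e\<in>{1..t}. subsets_of_card (S e) (h_of (card TT) k)).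
           (-1::int) ^ card F * int (card {K. K \<subseteq> TT - \<Union>F \<and> card K = k \<and> \<Phi> K}))"
proof -
  let ?h = "h_of (card TT) k"
  let ?A = "\<Union>e\<in>{1..t}. subsets_of_card (S e) ?h"
  let ?KS = "{K. K \<subseteq> TT \<and> card K = k \<and> \<Phi> K}"
  have finA: "finite ?A"
  proof (rule finite_UN_I)
    show "finite {1..t}" by simp
    fix e assume "e \<in> {1..t}"
    then have "S e \<subseteq> TT" using S by blast
    then have "subsets_of_card (S e) ?h \<subseteq> Pow TT" unfolding subsets_of_card_def by auto
    then show "finite (subsets_of_card (S e) ?h)" using fin by (rule finite_subset[OF _ finite_Pow_iff[THEN iffD2]])
  qed
  have finKS: "finite ?KS" by (rule finite_subset[of _ "Pow TT"]) (use fin in auto)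
  have IE: "int (card {K\<in>?KS. \<forall>X\<in>?A. \<not> X \<inter> K = {}})
     = (\<Sum>F\<in>Pow ?A. (-1::int) ^ card F * int (card {K\<in>?KS. \<forall>X\<in>F. X \<inter> K = {}}))"
    by (rule incl_excl[OF finA finKS])
  have L: "{K\<in>?KS. \<forall>X\<in>?A. \<not> X \<inter> K = {}} = {K. K \<subseteq> TT \<and> card K = k \<and> (\<forall>e\<in>{1..t}. k < 2 * card (K \<inter> S e)) \<and> \<Phi> K}"
  proof -
    have "(\<forall>X\<in>?A. X \<inter> K \<noteq> {}) = (\<forall>e\<in>{1..t}. k < 2 * card (K \<inter> S e))" if K: "K \<subseteq> TT" "card K = k" for K
    proof -
      have "(\<forall>X\<in>subsets_of_card (S e) ?h. X \<inter> K \<noteq> {}) = (k < 2 * card (K \<inter> S e))" if e: "e \<in> {1..t}" for e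
      proof -
        have fS: "finite (S e)" by (rule finite_subset[OF _ fin]) (use S e in blast)
        have fK: "finite K" by (rule finite_subset[OF K(1) fin])
        have c1: "card (S e - K) = card (S e) - card (K \<inter> S e)"
          using card_Diff_subset_Int[of "S e" K] fS by (simp add: Int_commute)
        have "card (K \<inter> S e) \<le> card (S e)" by (rule card_mono[OF fS Int_lower2])
        moreover have "card (K \<inter> S e) \<le> k" using card_mono[OF fK Int_lower1] K(2) by simp
        moreover have "2 * card (S e) = card TT" using S e by auto
        ultimately have ar: "(card (S e) - card (K \<inter> S e) < (2 * card (S e) - k + 1) div 2) = (k < 2 * card (K \<inter> S e))"
          using k by (intro arith_h) auto
        have hdef: "?h = (2 * card (S e) - k + 1) div 2" unfolding h_of_def using \<open>2 * card (S e) = card TT\<close> by simp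
        have "(\<forall>X\<in>subsets_of_card (S e) ?h. X \<inter> K \<noteq> {}) = (card (S e - K) < ?h)" by (rule avoid_iff[OF fS])
        also have "\<dots> = (card (S e) - card (K \<inter> S e) < (2 * card (S e) - k + 1) div 2)" by (simp only: c1 hdef)
        also have "\<dots> = (k < 2 * card (K \<inter> S e))" by (rule ar)
        finally show ?thesis .
      qed
      note pe = this
      have "(\<forall>X\<in>?A. X \<inter> K \<noteq> {}) = (\<forall>e\<in>{1..t}. \<forall>X\<in>subsets_of_card (S e) ?h. X \<inter> K \<noteq> {})"
        by (simp only: ball_UN)
      also have "\<dots> = (\<forall>e\<in>{1..t}. k < 2 * card (K \<inter> S e))"
        by (rule ball_cong[OF refl]) (rule pe)
      finally show ?thesis .
    qed
    note eqK = this
    show ?thesis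
    proof (rule Collect_cong)
      fix K show "(K \<in> ?KS \<and> (\<forall>X\<in>?A. \<not> X \<inter> K = {})) = (K \<subseteq> TT \<and> card K = k \<and> (\<forall>e\<in>{1..t}. k < 2 * card (K \<inter> S e)) \<and> \<Phi> K)"
        using eqK[of K] by auto
    qed
  qed
  have R: "{K\<in>?KS. \<forall>X\<in>F. X \<inter> K = {}} = {K. K \<subseteq> TT - \<Union>F \<and> card K = k \<and> \<Phi> K}" for F
    by auto
  show ?thesis using IE unfolding comm_def L R .
qed

definition Isum :: "sv set set \<Rightarrow> (sv set \<Rightarrow> int) \<Rightarrow> sv set \<Rightarrow> int" where
  "Isum N Q V = (\<Sum>G1\<in>Pow N - {{}}. (-1::int) ^ card G1 * Q (\<Union>G1 \<union> V))"

definition Dsum :: "sv set set \<Rightarrow> sv set set \<Rightarrow> sv set set \<Rightarrow> (sv set \<Rightarrow> int) \<Rightarrow> int" where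
  "Dsum P Nm Np Q = (\<Sum>G2\<in>Pow P. (-1::int) ^ card G2 * (Isum Nm Q (\<Union>G2) - Isum Np Q (\<Union>G2)))"

lemma IE_split:
  assumes "finite P" "finite N" "P \<inter> N = {}"
  shows "(\<Sum>F\<in>Pow (P \<union> N). (-1::int) ^ card F * Q (\<Union>F))
       = (\<Sum>G2\<in>Pow P. (-1::int) ^ card G2 * (Q (\<Union>G2) + Isum N Q (\<Union>G2)))"
proof -
  have "(\<Sum>F\<in>Pow (P \<union> N). (-1::int) ^ card F * Q (\<Union>F))
      = (\<Sum>G2\<in>Pow P. \<Sum>G1\<in>Pow N. (-1::int) ^ card (G1 \<union> G2) * Q (\<Union>(G1 \<union> G2)))"
    by (rule sum_Pow_Un[OF assms])
  also have "\<dots> = (\<Sum>G2\<in>Pow P. (-1::int) ^ card G2 * (Q (\<Union>G2) + Isum N Q (\<Union>G2)))"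
  proof (rule sum.cong[OF refl])
    fix G2 assume G2: "G2 \<in> Pow P"
    have "(\<Sum>G1\<in>Pow N. (-1::int) ^ card (G1 \<union> G2) * Q (\<Union>(G1 \<union> G2)))
        = (\<Sum>G1\<in>Pow N. (-1::int) ^ card G2 * ((-1::int) ^ card G1 * Q (\<Union>G1 \<union> \<Union>G2)))"
    proof (rule sum.cong[OF refl])
      fix G1 assume G1: "G1 \<in> Pow N"
      have "finite G1" using G1 assms(2) by (auto intro: finite_subset[OF _ assms(2)])
      moreover have "finite G2" using G2 by (auto intro: finite_subset[OF _ assms(1)])
      moreover have "G1 \<inter> G2 = {}" using G1 G2 assms(3) by auto
      ultimately have "card (G1 \<union> G2) = card G1 + card G2" by (simp add: card_Un_disjoint)
      then show "(-1::int) ^ card (G1 \<union> G2) * Q (\<Union>(G1 \<union> G2)) = (-1::int) ^ card G2 * ((-1::int) ^ card G1 * Q (\<Union>G1 \<union> \<Union>G2))"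
        by (simp add: power_add)
    qed
    also have "\<dots> = (-1::int) ^ card G2 * (\<Sum>G1\<in>Pow N. (-1::int) ^ card G1 * Q (\<Union>G1 \<union> \<Union>G2))"
      by (simp add: sum_distrib_left)
    also have "(\<Sum>G1\<in>Pow N. (-1::int) ^ card G1 * Q (\<Union>G1 \<union> \<Union>G2)) = Q (\<Union>G2) + Isum N Q (\<Union>G2)"
      unfolding Isum_def using assms(2) by (subst sum.remove[of _ "{}"]) auto
    finally show "(\<Sum>G1\<in>Pow N. (-1::int) ^ card (G1 \<union> G2) * Q (\<Union>(G1 \<union> G2))) = (-1::int) ^ card G2 * (Q (\<Union>G2) + Isum N Q (\<Union>G2))" .
  qed
  finally show ?thesis .
qed


lemma fam_bound:
  assumes fin: "finite TT" and F: "F \<subseteq> subsets_of_card TT h" and c: "card (\<Union>F) \<le> m"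
  shows "card F \<le> m choose h"
proof -
  have sub: "\<Union>F \<subseteq> TT" using F unfolding subsets_of_card_def by auto
  have fU: "finite (\<Union>F)" by (rule finite_subset[OF sub fin])
  have "F \<subseteq> {Y. Y \<subseteq> \<Union>F \<and> card Y = h}" using F unfolding subsets_of_card_def by auto
  moreover have "finite {Y. Y \<subseteq> \<Union>F \<and> card Y = h}"
    by (rule finite_subset[of _ "Pow (\<Union>F)"]) (use fU in auto)
  ultimately have "card F \<le> card {Y. Y \<subseteq> \<Union>F \<and> card Y = h}" by (rule card_mono[rotated])
  also have "\<dots> = card (\<Union>F) choose h" by (rule n_subsets[OF fU])
  also have "\<dots> \<le> m choose h" by (rule binomial_right_mono[OF c])
  finally show ?thesis .
qed

lemma nz_bound:
  assumes fin: "finite TT" and G1: "G1 \<subseteq> N" and G2: "G2 \<subseteq> P"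
    and H: "N \<subseteq> subsets_of_card TT h" "P \<subseteq> subsets_of_card TT h" and dj: "N \<inter> P = {}"
    and c: "card (\<Union>G1 \<union> \<Union>G2) \<le> m"
  shows "card G1 + card G2 \<le> m choose h" "card (\<Union>G1) \<le> m" "card (\<Union>G2) \<le> m"
proof -
  have fH: "finite (subsets_of_card TT h)"
    by (rule finite_subset[of _ "Pow TT"]) (use fin in \<open>auto simp: subsets_of_card_def\<close>)
  have f1: "finite G1" by (rule finite_subset[OF _ fH]) (use G1 H in blast)
  have f2: "finite G2" by (rule finite_subset[OF _ fH]) (use G2 H in blast)
  have "G1 \<inter> G2 = {}" using G1 G2 dj by blast
  then have "card (G1 \<union> G2) = card G1 + card G2" using f1 f2 by (simp add: card_Un_disjoint)
  moreover have "card (G1 \<union> G2) \<le> m choose h"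
    by (rule fam_bound[OF fin]) (use G1 G2 H c in auto)
  ultimately show "card G1 + card G2 \<le> m choose h" by simp
  have sub: "\<Union>G1 \<union> \<Union>G2 \<subseteq> TT" using G1 G2 H unfolding subsets_of_card_def by blast
  have fU: "finite (\<Union>G1 \<union> \<Union>G2)" by (rule finite_subset[OF sub fin])
  show "card (\<Union>G1) \<le> m" using card_mono[OF fU Un_upper1] c by simp
  show "card (\<Union>G2) \<le> m" using card_mono[OF fU Un_upper2] c by simp
qed

lemma S1_Dsum:
  assumes fin: "finite TT" and TT: "TT = topes L"
    and HP: "P_fam t TT a k \<subseteq> subsets_of_card TT (h_of (card TT) k)"
    and Hm: "Nminus t TT a k \<subseteq> subsets_of_card TT (h_of (card TT) k)"
    and Hp: "Nplus t TT a k \<subseteq> subsets_of_card TT (h_of (card TT) k)"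
    and djm: "Nminus t TT a k \<inter> P_fam t TT a k = {}"
    and djp: "Nplus t TT a k \<inter> P_fam t TT a k = {}"
    and Qz: "\<And>U. U \<subseteq> TT \<Longrightarrow> card TT - k < card U \<Longrightarrow> Q U = 0"
  shows "S1 t TT a k (\<lambda>G1 G2. Q (\<Union>(G1 \<union> G2))) = Dsum (P_fam t TT a k) (Nminus t TT a k) (Nplus t TT a k) Q"
proof -
  define n where "n = card TT"
  define h where "h = h_of n k"
  define B where "B = int (n - k choose h)"
  define P where "P = P_fam t TT a k"
  define Nm where "Nm = Nminus t TT a k"
  define Np where "Np = Nplus t TT a k"
  define inner where "inner = (\<lambda>N G2. \<Sum>G1 \<in> {G1. G1 \<subseteq> N \<and> 1 \<le> card G1 \<and> int (card G1) \<le> B - int (card G2)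
                                      \<and> card (\<Union>G1) \<le> n - k}.
                           (-1::int) ^ card G1 * Q (\<Union>(G1 \<union> G2)))"
  have S1e: "S1 t TT a k (\<lambda>G1 G2. Q (\<Union>(G1 \<union> G2))) =
      (\<Sum>G2 \<in> {G2. G2 \<subseteq> P \<and> int (card G2) \<le> B - 1 \<and> card (\<Union>G2) \<le> n - k}.
          (-1::int) ^ card G2 * (inner Nm G2 - inner Np G2))"
    unfolding S1_def Let_def n_def h_def B_def P_def Nm_def Np_def inner_def by simp
  have fH: "finite (subsets_of_card TT h)"
    by (rule finite_subset[of _ "Pow TT"]) (use fin in \<open>auto simp: subsets_of_card_def\<close>)
  note HH = HP[folded n_def, folded h_def, folded P_def] Hm[folded n_def, folded h_def, folded Nm_def] Hp[folded n_def, folded h_def, folded Np_def]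
  have finP: "finite P" by (rule finite_subset[OF HH(1) fH])
  have finN: "finite Nm" "finite Np" by (rule finite_subset[OF HH(2) fH], rule finite_subset[OF HH(3) fH])
  have QzU: "Q (\<Union>G1 \<union> \<Union>G2) = 0" if "G1 \<subseteq> N" "G2 \<subseteq> P" "N \<subseteq> subsets_of_card TT h" "N \<inter> P = {}"
      "\<not> card (\<Union>G1 \<union> \<Union>G2) \<le> n - k" for G1 G2 N
  proof (rule Qz)
    show "\<Union>G1 \<union> \<Union>G2 \<subseteq> TT" using that HH(1) unfolding subsets_of_card_def by blast
    show "card TT - k < card (\<Union>G1 \<union> \<Union>G2)" using that(5) unfolding n_def by simp
  qed
  have inner_eq: "inner N G2 = Isum N Q (\<Union>G2)"
    if N: "N \<subseteq> subsets_of_card TT h" "N \<inter> P = {}" "finite N" and G2: "G2 \<subseteq> P" for N G2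
    unfolding inner_def Isum_def
  proof (rule sum.mono_neutral_cong_left)
    show "finite (Pow N - {{}})" using N by simp
    show "{G1. G1 \<subseteq> N \<and> 1 \<le> card G1 \<and> int (card G1) \<le> B - int (card G2) \<and> card (\<Union>G1) \<le> n - k} \<subseteq> Pow N - {{}}"
      by auto
    show "\<forall>G1\<in>Pow N - {{}} - {G1. G1 \<subseteq> N \<and> 1 \<le> card G1 \<and> int (card G1) \<le> B - int (card G2) \<and> card (\<Union>G1) \<le> n - k}.
       (-1::int) ^ card G1 * Q (\<Union>G1 \<union> \<Union>G2) = 0"
    proof
      fix G1 assume G1: "G1 \<in> Pow N - {{}} - {G1. G1 \<subseteq> N \<and> 1 \<le> card G1 \<and> int (card G1) \<le> B - int (card G2) \<and> card (\<Union>G1) \<le> n - k}"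
      have G1N: "G1 \<subseteq> N" "G1 \<noteq> {}" using G1 by auto
      have fG1: "finite G1" using G1N(1) N(3) by (rule finite_subset)
      have "Q (\<Union>G1 \<union> \<Union>G2) = 0"
      proof (cases "card (\<Union>G1 \<union> \<Union>G2) \<le> n - k")
        case True
        note b = nz_bound[OF fin G1N(1) G2 N(1) HH(1) N(2) True]
        have "1 \<le> card G1" using fG1 G1N(2) by (simp add: Suc_le_eq card_gt_0_iff)
        then have "G1 \<in> {G1. G1 \<subseteq> N \<and> 1 \<le> card G1 \<and> int (card G1) \<le> B - int (card G2) \<and> card (\<Union>G1) \<le> n - k}"
          using b G1N unfolding B_def by auto
        then show ?thesis using G1 by blast
      next
        case False
        then show ?thesis using QzU[OF G1N(1) G2 N(1) N(2)] by blast
      qed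
      then show "(-1::int) ^ card G1 * Q (\<Union>G1 \<union> \<Union>G2) = 0" by simp
    qed
    show "(-1::int) ^ card x * Q (\<Union>(x \<union> G2)) = (-1::int) ^ card x * Q (\<Union>x \<union> \<Union>G2)" for x
      by simp
  qed
  have "(\<Sum>G2 \<in> {G2. G2 \<subseteq> P \<and> int (card G2) \<le> B - 1 \<and> card (\<Union>G2) \<le> n - k}.
          (-1::int) ^ card G2 * (inner Nm G2 - inner Np G2))
      = (\<Sum>G2\<in>Pow P. (-1::int) ^ card G2 * (Isum Nm Q (\<Union>G2) - Isum Np Q (\<Union>G2)))"
  proof (rule sum.mono_neutral_cong_left)
    show "finite (Pow P)" using finP by simp
    show "{G2. G2 \<subseteq> P \<and> int (card G2) \<le> B - 1 \<and> card (\<Union>G2) \<le> n - k} \<subseteq> Pow P" by auto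
    have I0: "Isum N Q (\<Union>G2) = 0" if N: "N \<subseteq> subsets_of_card TT h" "N \<inter> P = {}"
        and G2: "G2 \<in> Pow P - {G2. G2 \<subseteq> P \<and> int (card G2) \<le> B - 1 \<and> card (\<Union>G2) \<le> n - k}" for N G2
      unfolding Isum_def
    proof (rule sum.neutral, rule ballI)
      fix G1 assume G1: "G1 \<in> Pow N - {{}}"
      have G1N: "G1 \<subseteq> N" "G1 \<noteq> {}" using G1 by auto
      have G2P: "G2 \<subseteq> P" using G2 by auto
      have fN: "finite N" by (rule finite_subset[OF N(1) fH])
      have fG1: "finite G1" using G1N(1) fN by (rule finite_subset)
      have "Q (\<Union>G1 \<union> \<Union>G2) = 0"
      proof (cases "card (\<Union>G1 \<union> \<Union>G2) \<le> n - k")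
        case True
        note b = nz_bound[OF fin G1N(1) G2P N(1) HH(1) N(2) True]
        have "1 \<le> card G1" using fG1 G1N(2) by (simp add: Suc_le_eq card_gt_0_iff)
        then have "G2 \<in> {G2. G2 \<subseteq> P \<and> int (card G2) \<le> B - 1 \<and> card (\<Union>G2) \<le> n - k}"
          using b G2P unfolding B_def by auto
        then show ?thesis using G2 by blast
      next
        case False
        then show ?thesis using QzU[OF G1N(1) G2P N(1) N(2)] by blast
      qed
      then show "(-1::int) ^ card G1 * Q (\<Union>G1 \<union> \<Union>G2) = 0" by simp
    qed
    show "\<forall>G2\<in>Pow P - {G2. G2 \<subseteq> P \<and> int (card G2) \<le> B - 1 \<and> card (\<Union>G2) \<le> n - k}.
       (-1::int) ^ card G2 * (Isum Nm Q (\<Union>G2) - Isum Np Q (\<Union>G2)) = 0"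
      using I0[OF HH(2) djm[folded P_def Nm_def]] I0[OF HH(3) djp[folded P_def Np_def]] by simp
    show "(-1::int) ^ card x * (inner Nm x - inner Np x) = (-1::int) ^ card x * (Isum Nm Q (\<Union>x) - Isum Np Q (\<Union>x))"
      if "x \<in> {G2. G2 \<subseteq> P \<and> int (card G2) \<le> B - 1 \<and> card (\<Union>G2) \<le> n - k}" for x
      using that inner_eq[OF HH(2) djm[folded P_def Nm_def] finN(1)] inner_eq[OF HH(3) djp[folded P_def Np_def] finN(2)] by simp
  qed
  then show ?thesis unfolding S1e Dsum_def P_def Nm_def Np_def .
qed


lemma key_val: "lat_val (key F) = \<Union>F" unfolding key_def by auto

lemma S2_Dsum:
  assumes fin: "finite TT" and h1: "1 \<le> h_of (card TT) k"
    and HP: "P_fam t TT a k \<subseteq> subsets_of_card TT (h_of (card TT) k)"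
    and Hm: "Nminus t TT a k \<subseteq> subsets_of_card TT (h_of (card TT) k)"
    and Hp: "Nplus t TT a k \<subseteq> subsets_of_card TT (h_of (card TT) k)"
    and Qz: "\<And>U. U \<subseteq> TT \<Longrightarrow> card TT - k < card U \<Longrightarrow> Q U = 0"
  shows "S2 t TT a k (\<lambda>G1 G2. Q (G1 \<union> G2)) = Dsum (P_fam t TT a k) (Nminus t TT a k) (Nplus t TT a k) Q"
proof -
  define n where "n = card TT"
  define h where "h = h_of n k"
  define P where "P = P_fam t TT a k"
  define Nm where "Nm = Nminus t TT a k"
  define Np where "Np = Nplus t TT a k"
  define inner where "inner = (\<lambda>N G2. \<Sum>G1 \<in> {G1\<in>lat_E N. 0 < card (lat_val G1) \<and> card (lat_val G1) \<le> n - k}.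
                           moebius (lat_E N) lat_le None G1 * Q (lat_val G1 \<union> lat_val G2))"
  have S2e: "S2 t TT a k (\<lambda>G1 G2. Q (G1 \<union> G2)) =
     (\<Sum>G2 \<in> {G2\<in>lat_E P. card (lat_val G2) \<le> n - k}.
          moebius (lat_E P) lat_le None G2 * (inner Nm G2 - inner Np G2))"
    unfolding S2_def Let_def n_def P_def Nm_def Np_def inner_def by simp
  have fH: "finite (subsets_of_card TT h)"
    by (rule finite_subset[of _ "Pow TT"]) (use fin in \<open>auto simp: subsets_of_card_def\<close>)
  note HH = HP[folded n_def, folded h_def, folded P_def] Hm[folded n_def, folded h_def, folded Nm_def] Hp[folded n_def, folded h_def, folded Np_def]
  have hpos: "1 \<le> h" using h1 unfolding h_def n_def .
  have famfin: "finite N" "\<forall>X\<in>N. finite X" if "N \<subseteq> subsets_of_card TT h" for N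
  proof -
    show "finite N" by (rule finite_subset[OF that fH])
    show "\<forall>X\<in>N. finite X" using that fin unfolding subsets_of_card_def by (auto intro: finite_subset[OF _ fin])
  qed
  have latsub: "lat_val y \<subseteq> TT" if lN: "N \<subseteq> subsets_of_card TT h" and ly: "y \<in> lat_E N" for N y
  proof (cases y)
    case (Some Y)
    then obtain F where "F \<subseteq> N" "Y = \<Union>F" using ly unfolding lat_E_def by auto
    then show ?thesis using lN Some unfolding subsets_of_card_def by auto
  qed simp
  have Qbig: "Q (X \<union> V) = 0" if "X \<subseteq> TT" "V \<subseteq> TT" "n - k < card X \<or> n - k < card V" for X V
  proof (rule Qz)
    show "X \<union> V \<subseteq> TT" using that by auto
    have fXV: "finite (X \<union> V)" using that fin by (auto intro: finite_subset[OF _ fin])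
    have "card X \<le> card (X \<union> V)" "card V \<le> card (X \<union> V)"
      using card_mono[OF fXV Un_upper1] card_mono[OF fXV Un_upper2] by auto
    then show "card TT - k < card (X \<union> V)" using that(3) unfolding n_def by auto
  qed
  have inner_eq: "inner N G2 = Isum N Q (lat_val G2)"
    if N: "N \<subseteq> subsets_of_card TT h" and G2: "lat_val G2 \<subseteq> TT" for N G2
  proof -
    note ff = famfin[OF N]
    have finL: "finite (lat_E N)" using lat_E_finite ff(1) by blast
    have "inner N G2 = (\<Sum>G1 \<in> lat_E N - {None}. moebius (lat_E N) lat_le None G1 * Q (lat_val G1 \<union> lat_val G2))"
      unfolding inner_def
    proof (rule sum.mono_neutral_cong_left)
      show "finite (lat_E N - {None})" using finL by simp
      show "{G1\<in>lat_E N. 0 < card (lat_val G1) \<and> card (lat_val G1) \<le> n - k} \<subseteq> lat_E N - {None}"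
        by auto
      show "\<forall>G1\<in>lat_E N - {None} - {G1\<in>lat_E N. 0 < card (lat_val G1) \<and> card (lat_val G1) \<le> n - k}.
          moebius (lat_E N) lat_le None G1 * Q (lat_val G1 \<union> lat_val G2) = 0"
      proof
        fix G1 assume G1: "G1 \<in> lat_E N - {None} - {G1\<in>lat_E N. 0 < card (lat_val G1) \<and> card (lat_val G1) \<le> n - k}"
        then obtain F where F: "F \<subseteq> N" "F \<noteq> {}" "G1 = Some (\<Union>F)" unfolding lat_E_def by auto
        then obtain X where X: "X \<in> F" by blast
        have "card X = h" "X \<subseteq> TT" using X F N unfolding subsets_of_card_def by auto
        then have "X \<noteq> {}" using hpos by auto
        moreover have "X \<subseteq> lat_val G1" using X F by auto
        moreover have "finite (lat_val G1)" using lat_val_finite[OF ff] G1 by blast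
        ultimately have "0 < card (lat_val G1)" by (metis card_gt_0_iff subset_empty)
        then have "n - k < card (lat_val G1)" using G1 by auto
        moreover have "lat_val G1 \<subseteq> TT" using latsub[OF N] G1 by blast
        ultimately have "Q (lat_val G1 \<union> lat_val G2) = 0" using Qbig G2 by blast
        then show "moebius (lat_E N) lat_le None G1 * Q (lat_val G1 \<union> lat_val G2) = 0" by simp
      qed
    qed simp
    also have "\<dots> = (\<Sum>F\<in>{F\<in>Pow N. key F \<in> lat_E N - {None}}. (-1::int) ^ card F * Q (lat_val (key F) \<union> lat_val G2))"
      by (rule moebius_sum[OF ff]) auto
    also have "{F\<in>Pow N. key F \<in> lat_E N - {None}} = Pow N - {{}}"
    proof -
      have "(F \<in> Pow N \<and> key F \<in> lat_E N - {None}) = (F \<in> Pow N - {{}})" for F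
        using key_in_lat[of F N] by (cases "F = {}") (auto simp: key_def)
      then show ?thesis by blast
    qed
    finally show ?thesis unfolding Isum_def key_val .
  qed
  note ffP = famfin[OF HH(1)]
  have finLP: "finite (lat_E P)" using lat_E_finite ffP(1) by blast
  have "(\<Sum>G2 \<in> {G2\<in>lat_E P. card (lat_val G2) \<le> n - k}.
          moebius (lat_E P) lat_le None G2 * (inner Nm G2 - inner Np G2))
      = (\<Sum>G2 \<in> lat_E P. moebius (lat_E P) lat_le None G2 * (Isum Nm Q (lat_val G2) - Isum Np Q (lat_val G2)))"
  proof (rule sum.mono_neutral_cong_left)
    show "finite (lat_E P)" by (rule finLP)
    show "{G2\<in>lat_E P. card (lat_val G2) \<le> n - k} \<subseteq> lat_E P" by auto
    have I0: "Isum N Q (lat_val G2) = 0" if "N \<subseteq> subsets_of_card TT h" "lat_val G2 \<subseteq> TT" "n - k < card (lat_val G2)" for N G2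
      unfolding Isum_def
    proof (rule sum.neutral, rule ballI)
      fix G1 assume "G1 \<in> Pow N - {{}}"
      then have "\<Union>G1 \<subseteq> TT" using that(1) unfolding subsets_of_card_def by auto
      then show "(-1::int) ^ card G1 * Q (\<Union>G1 \<union> lat_val G2) = 0" using Qbig that by simp
    qed
    show "\<forall>G2\<in>lat_E P - {G2\<in>lat_E P. card (lat_val G2) \<le> n - k}.
       moebius (lat_E P) lat_le None G2 * (Isum Nm Q (lat_val G2) - Isum Np Q (lat_val G2)) = 0"
    proof
      fix G2 assume G2: "G2 \<in> lat_E P - {G2\<in>lat_E P. card (lat_val G2) \<le> n - k}"
      then have "lat_val G2 \<subseteq> TT" "n - k < card (lat_val G2)" using latsub[OF HH(1)] by auto
      then show "moebius (lat_E P) lat_le None G2 * (Isum Nm Q (lat_val G2) - Isum Np Q (lat_val G2)) = 0"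
        using I0[OF HH(2)] I0[OF HH(3)] by simp
    qed
    show "moebius (lat_E P) lat_le None x * (inner Nm x - inner Np x) =
        moebius (lat_E P) lat_le None x * (Isum Nm Q (lat_val x) - Isum Np Q (lat_val x))"
      if "x \<in> {G2\<in>lat_E P. card (lat_val G2) \<le> n - k}" for x
    proof -
      have "lat_val x \<subseteq> TT" using that latsub[OF HH(1)] by auto
      then show ?thesis using inner_eq[OF HH(2)] inner_eq[OF HH(3)] by simp
    qed
  qed
  also have "\<dots> = (\<Sum>F\<in>{F\<in>Pow P. key F \<in> lat_E P}. (-1::int) ^ card F * (Isum Nm Q (lat_val (key F)) - Isum Np Q (lat_val (key F))))"
    by (rule moebius_sum[OF ffP]) simp
  also have "{F\<in>Pow P. key F \<in> lat_E P} = Pow P" using key_in_lat by auto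
  finally show ?thesis unfolding S2e Dsum_def key_val P_def Nm_def Np_def .
qed


lemma Dsum_cong:
  assumes "P \<subseteq> Pow TT" "Nm \<subseteq> Pow TT" "Np \<subseteq> Pow TT"
    and "\<And>U. U \<subseteq> TT \<Longrightarrow> Q U = Q' U"
  shows "Dsum P Nm Np Q = Dsum P Nm Np Q'"
proof -
  have Ic: "Isum N Q V = Isum N Q' V" if "N \<subseteq> Pow TT" "V \<subseteq> TT" for N V
    unfolding Isum_def
  proof (rule sum.cong[OF refl])
    fix G1 assume "G1 \<in> Pow N - {{}}"
    then have "\<Union>G1 \<union> V \<subseteq> TT" using that by auto
    then show "(-1::int) ^ card G1 * Q (\<Union>G1 \<union> V) = (-1::int) ^ card G1 * Q' (\<Union>G1 \<union> V)"
      using assms(4) by simp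
  qed
  show ?thesis unfolding Dsum_def
  proof (rule sum.cong[OF refl])
    fix G2 assume "G2 \<in> Pow P"
    then have "\<Union>G2 \<subseteq> TT" using assms(1) by auto
    then show "(-1::int) ^ card G2 * (Isum Nm Q (\<Union>G2) - Isum Np Q (\<Union>G2)) =
         (-1::int) ^ card G2 * (Isum Nm Q' (\<Union>G2) - Isum Np Q' (\<Union>G2))"
      using Ic[OF assms(2)] Ic[OF assms(3)] by simp
  qed
qed

lemma comm_diff:
  assumes fin: "finite TT"
    and S: "\<forall>e\<in>{1..t}. S e \<subseteq> TT \<and> 2 * card (S e) = card TT"
    and S': "\<forall>e\<in>{1..t}. S' e \<subseteq> TT \<and> 2 * card (S' e) = card TT"
    and k: "2 * k \<le> card TT"
    and AS: "(\<Union>e\<in>{1..t}. subsets_of_card (S e) (h_of (card TT) k)) = P \<union> Np"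
    and AS': "(\<Union>e\<in>{1..t}. subsets_of_card (S' e) (h_of (card TT) k)) = P \<union> Nm"
    and fP: "finite P" "finite Nm" "finite Np" and dj: "P \<inter> Nm = {}" "P \<inter> Np = {}"
  shows "int (comm t TT S' k \<Phi>) - int (comm t TT S k \<Phi>)
     = Dsum P Nm Np (\<lambda>U. int (card {K. K \<subseteq> TT - U \<and> card K = k \<and> \<Phi> K}))"
proof -
  define g where "g = (\<lambda>U. int (card {K. K \<subseteq> TT - U \<and> card K = k \<and> \<Phi> K}))"
  have e1: "int (comm t TT S' k \<Phi>) = (\<Sum>G2\<in>Pow P. (-1::int) ^ card G2 * (g (\<Union>G2) + Isum Nm g (\<Union>G2)))"
    using comm_IE[OF fin S' k, of \<Phi>] IE_split[OF fP(1) fP(2) dj(1), of g] unfolding AS' g_def by simp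
  have e2: "int (comm t TT S k \<Phi>) = (\<Sum>G2\<in>Pow P. (-1::int) ^ card G2 * (g (\<Union>G2) + Isum Np g (\<Union>G2)))"
    using comm_IE[OF fin S k, of \<Phi>] IE_split[OF fP(1) fP(3) dj(2), of g] unfolding AS g_def by simp
  have "int (comm t TT S' k \<Phi>) - int (comm t TT S k \<Phi>) = Dsum P Nm Np g"
    unfolding e1 e2 Dsum_def sum_subtractf[symmetric] by (rule sum.cong[OF refl]) (simp add: algebra_simps)
  then show ?thesis unfolding g_def .
qed

lemma Qkappa_eq:
  assumes "finite TT" "U \<subseteq> TT"
  shows "int (card {K. K \<subseteq> TT - U \<and> card K = k \<and> True}) = Qkappa TT k U"
proof -
  have "card {K. K \<subseteq> TT - U \<and> card K = k \<and> True} = card (TT - U) choose k"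
    using n_subsets[of "TT - U" k] assms by simp
  also have "card (TT - U) = card TT - card U" using assms by (simp add: card_Diff_subset finite_subset)
  finally show ?thesis unfolding Qkappa_def by simp
qed

lemma Qring_eq:
  assumes fin: "finite TT" and U: "U \<subseteq> TT"
    and inv: "\<forall>y\<in>TT. sv_neg y \<in> TT \<and> sv_neg (sv_neg y) = y \<and> sv_neg y \<noteq> y"
  shows "int (card {K. K \<subseteq> TT - U \<and> card K = k \<and> afree K}) = Qring TT k U"
proof -
  define W where "W = U \<union> sv_neg ` U"
  have WT: "W \<subseteq> TT" unfolding W_def using U inv by auto
  have fU: "finite U" by (rule finite_subset[OF U fin])
  have fW: "finite W" by (rule finite_subset[OF WT fin])
  have memneg: "(y \<in> sv_neg ` U) = (sv_neg y \<in> U)" for y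
    by (metis image_iff sv_neg_inv)
  have D: "Dn sv_neg (TT - U) = W - U"
    unfolding Dn_def W_def using U inv memneg by auto
  have Pr: "Pr sv_neg (TT - U) = TT - W"
    unfolding Pr_def W_def using U inv memneg by auto
  have cD: "card (W - U) = card W - card U" using fU by (simp add: card_Diff_subset W_def)
  have cP: "card (TT - W) = card TT - card W" using fW WT by (simp add: card_Diff_subset)
  have "card {K. K \<subseteq> TT - U \<and> card K = k \<and> afree K} = af sv_neg (TT - U) k"
    unfolding af_def afree_def by simp
  also have "\<dots> = Fm (card W - card U) ((card TT - card W) div 2) k"
    using af_formula[OF inv fin, of "TT - U"] D Pr cD cP by auto
  finally show ?thesis unfolding Qring_def Let_def W_def[symmetric] Fm_def by simp
qed

lemma Qz_gen:
  assumes fin: "finite TT" "U \<subseteq> TT" "card TT - k < card U"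
  shows "card {K. K \<subseteq> TT - U \<and> card K = k \<and> \<Phi> K} = 0"
proof -
  have "{K. K \<subseteq> TT - U \<and> card K = k \<and> \<Phi> K} = {}"
  proof (rule ccontr)
    assume "{K. K \<subseteq> TT - U \<and> card K = k \<and> \<Phi> K} \<noteq> {}"
    then obtain K where K: "K \<subseteq> TT - U" "card K = k" by blast
    have "card K \<le> card (TT - U)" using K(1) fin by (intro card_mono) auto
    moreover have "card (TT - U) = card TT - card U" using fin by (simp add: card_Diff_subset finite_subset)
    moreover have "card U \<le> card TT" using fin by (simp add: card_mono)
    ultimately show False using K(2) fin(3) by linarith
  qed
  then show ?thesis by (metis card.empty)
qed


lemma UN_split: "a \<in> A \<Longrightarrow> (\<Union>e\<in>A. f e) = f a \<union> (\<Union>e\<in>A - {a}. f e)"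
  by blast

theorem mainTheorem7:
  fixes t a k :: nat and L :: "sv set"
  assumes "1 \<le> t"
    and "oriented_matroid t L"
    and "simple_om t L"
    and "a \<in> {1..t}"
    and "1 \<le> k" and "2 * k \<le> card (topes L)"
  shows "S1 t (topes L) a k (\<lambda>G1 G2. Qkappa (topes L) k (\<Union>(G1 \<union> G2)))
           = int (kappa_star t k (reorient_topes a (topes L))) - int (kappa_star t k (topes L))
       \<and> S2 t (topes L) a k (\<lambda>G1 G2. Qkappa (topes L) k (G1 \<union> G2))
           = int (kappa_star t k (reorient_topes a (topes L))) - int (kappa_star t k (topes L))
       \<and> S1 t (topes L) a k (\<lambda>G1 G2. Qring (topes L) k (\<Union>(G1 \<union> G2)))
           = int (kappa_ring t k (reorient_topes a (topes L))) - int (kappa_ring t k (topes L))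
       \<and> S2 t (topes L) a k (\<lambda>G1 G2. Qring (topes L) k (G1 \<union> G2))
           = int (kappa_ring t k (reorient_topes a (topes L))) - int (kappa_ring t k (topes L))"
proof -
  note om = assms(2) and s = assms(3) and aE = assms(4)
  define TT where "TT = topes L"
  define h where "h = h_of (card TT) k"
  define P where "P = P_fam t TT a k"
  define Nm where "Nm = Nminus t TT a k"
  define Np where "Np = Nplus t TT a k"
  have fin: "finite TT" unfolding TT_def using finite_topes[OF om] .
  have k2: "2 * k \<le> card TT" using assms(6) unfolding TT_def .
  have klt: "k < card TT" using k2 assms(5) by linarith
  have h1: "1 \<le> h_of (card TT) k" unfolding h_of_def using k2 assms(5) by simp
  have posS: "\<forall>e\<in>{1..t}. topes_pos TT e \<subseteq> TT \<and> 2 * card (topes_pos TT e) = card TT"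
  proof
    fix e assume e: "e \<in> {1..t}"
    show "topes_pos TT e \<subseteq> TT \<and> 2 * card (topes_pos TT e) = card TT"
      unfolding TT_def using card_pos_half(1,2)[OF om s e] by (rule conjI[rotated])
  qed
  have negS: "\<forall>e\<in>{1..t}. topes_neg TT e \<subseteq> TT \<and> 2 * card (topes_neg TT e) = card TT"
  proof
    fix e assume e: "e \<in> {1..t}"
    show "topes_neg TT e \<subseteq> TT \<and> 2 * card (topes_neg TT e) = card TT"
      unfolding TT_def using card_pos_half(3,4)[OF om s e] by (rule conjI[rotated])
  qed
  have S'S: "\<forall>e\<in>{1..t}. Sre TT a e \<subseteq> TT \<and> 2 * card (Sre TT a e) = card TT"
  proof
    fix e assume e: "e \<in> {1..t}"
    show "Sre TT a e \<subseteq> TT \<and> 2 * card (Sre TT a e) = card TT"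
    proof (cases "e = a")
      case True then show ?thesis unfolding Sre_def using negS aE by simp
    next
      case False then show ?thesis unfolding Sre_def using posS e by simp
    qed
  qed
  have subH: "subsets_of_card X h \<subseteq> subsets_of_card TT h" if "X \<subseteq> TT" for X
    using that unfolding subsets_of_card_def by auto
  have HP: "P \<subseteq> subsets_of_card TT h"
    unfolding P_def P_fam_def h_def subsets_of_card_def topes_pos_def by auto
  have Hm: "Nm \<subseteq> subsets_of_card TT h"
    unfolding Nm_def Nminus_def h_def subsets_of_card_def topes_neg_def by auto
  have Hp: "Np \<subseteq> subsets_of_card TT h"
    unfolding Np_def Nplus_def h_def subsets_of_card_def topes_pos_def by auto
  have djm: "Nm \<inter> P = {}" unfolding Nm_def Nminus_def P_def by blast
  have djp: "Np \<inter> P = {}" unfolding Np_def Nplus_def P_def by blast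
  have fH: "finite (subsets_of_card TT h)"
    by (rule finite_subset[of _ "Pow TT"]) (use fin in \<open>auto simp: subsets_of_card_def\<close>)
  have finP: "finite P" "finite Nm" "finite Np"
    by (rule finite_subset[OF HP fH], rule finite_subset[OF Hm fH], rule finite_subset[OF Hp fH])
  have powT: "P \<subseteq> Pow TT" "Nm \<subseteq> Pow TT" "Np \<subseteq> Pow TT"
    using HP Hm Hp unfolding subsets_of_card_def by auto
  have ins: "{1..t} = insert a ({1..t} - {a})" using aE by auto
  have AS: "(\<Union>e\<in>{1..t}. subsets_of_card (topes_pos TT e) h) = P \<union> Np"
  proof -
    have "(\<Union>e\<in>{1..t}. subsets_of_card (topes_pos TT e) h)
        = subsets_of_card (topes_pos TT a) h \<union> (\<Union>e\<in>{1..t} - {a}. subsets_of_card (topes_pos TT e) h)"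
      by (rule UN_split[OF aE])
    also have "\<dots> = P \<union> Np" unfolding P_def Np_def Nplus_def P_fam_def h_def by blast
    finally show ?thesis .
  qed
  have AS': "(\<Union>e\<in>{1..t}. subsets_of_card (Sre TT a e) h) = P \<union> Nm"
  proof -
    have "(\<Union>e\<in>{1..t}. subsets_of_card (Sre TT a e) h)
        = subsets_of_card (Sre TT a a) h \<union> (\<Union>e\<in>{1..t} - {a}. subsets_of_card (Sre TT a e) h)"
      by (rule UN_split[OF aE])
    also have "(\<Union>e\<in>{1..t} - {a}. subsets_of_card (Sre TT a e) h) = (\<Union>e\<in>{1..t} - {a}. subsets_of_card (topes_pos TT e) h)"
      by (rule SUP_cong[OF refl]) (simp add: Sre_def)
    also have "subsets_of_card (Sre TT a a) h = subsets_of_card (topes_neg TT a) h" by (simp add: Sre_def)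
    also have "subsets_of_card (topes_neg TT a) h \<union> (\<Union>e\<in>{1..t} - {a}. subsets_of_card (topes_pos TT e) h) = P \<union> Nm"
      unfolding P_def Nm_def Nminus_def P_fam_def h_def by blast
    finally show ?thesis .
  qed
  have inv: "\<forall>y\<in>TT. sv_neg y \<in> TT \<and> sv_neg (sv_neg y) = y \<and> sv_neg y \<noteq> y"
    unfolding TT_def using tope_neg[OF om] tope_neg_ne[OF om s _ assms(1)] by auto
  have djm': "P \<inter> Nm = {}" using djm by blast
  have djp': "P \<inter> Np = {}" using djp by blast
  note cd = comm_diff[OF fin posS S'S k2 AS[unfolded h_def] AS'[unfolded h_def] finP djm' djp']
  have eqk: "Dsum P Nm Np (\<lambda>U. int (card {K. K \<subseteq> TT - U \<and> card K = k \<and> True})) = Dsum P Nm Np (Qkappa TT k)"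
    by (rule Dsum_cong[OF powT]) (rule Qkappa_eq[OF fin])
  have eqr: "Dsum P Nm Np (\<lambda>U. int (card {K. K \<subseteq> TT - U \<and> card K = k \<and> afree K})) = Dsum P Nm Np (Qring TT k)"
    by (rule Dsum_cong[OF powT]) (rule Qring_eq[OF fin _ inv])
  have cd1: "int (comm t TT (Sre TT a) k (\<lambda>_. True)) - int (comm t TT (topes_pos TT) k (\<lambda>_. True)) = Dsum P Nm Np (Qkappa TT k)"
    by (rule trans[OF cd[of "\<lambda>_. True"] eqk])
  have cd2: "int (comm t TT (Sre TT a) k afree) - int (comm t TT (topes_pos TT) k afree) = Dsum P Nm Np (Qring TT k)"
    by (rule trans[OF cd[of afree] eqr])
  have Qz1: "Qkappa TT k U = 0" if "U \<subseteq> TT" "card TT - k < card U" for U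
    using Qkappa_eq[OF fin that(1), of k] Qz_gen[OF fin that, of "\<lambda>_. True"] by simp
  have Qz2: "Qring TT k U = 0" if "U \<subseteq> TT" "card TT - k < card U" for U
    using Qring_eq[OF fin that(1) inv, of k] Qz_gen[OF fin that, of afree] by simp
  note HP' = HP[unfolded P_def h_def] and Hm' = Hm[unfolded Nm_def h_def] and Hp' = Hp[unfolded Np_def h_def]
  have s1k: "S1 t TT a k (\<lambda>G1 G2. Qkappa TT k (\<Union>(G1 \<union> G2))) = Dsum P Nm Np (Qkappa TT k)"
    unfolding P_def Nm_def Np_def
    by (rule S1_Dsum[OF fin TT_def HP' Hm' Hp' djm[unfolded Nm_def P_def] djp[unfolded Np_def P_def]]) (rule Qz1)
  have s1r: "S1 t TT a k (\<lambda>G1 G2. Qring TT k (\<Union>(G1 \<union> G2))) = Dsum P Nm Np (Qring TT k)"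
    unfolding P_def Nm_def Np_def
    by (rule S1_Dsum[OF fin TT_def HP' Hm' Hp' djm[unfolded Nm_def P_def] djp[unfolded Np_def P_def]]) (rule Qz2)
  have s2k: "S2 t TT a k (\<lambda>G1 G2. Qkappa TT k (G1 \<union> G2)) = Dsum P Nm Np (Qkappa TT k)"
    unfolding P_def Nm_def Np_def
    by (rule S2_Dsum[OF fin h1 HP' Hm' Hp']) (rule Qz1)
  have s2r: "S2 t TT a k (\<lambda>G1 G2. Qring TT k (G1 \<union> G2)) = Dsum P Nm Np (Qring TT k)"
    unfolding P_def Nm_def Np_def
    by (rule S2_Dsum[OF fin h1 HP' Hm' Hp']) (rule Qz2)
  have kk: "kappa_star t k TT = comm t TT (topes_pos TT) k (\<lambda>_. True)"
      "kappa_ring t k TT = comm t TT (topes_pos TT) k afree"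
    using kappa_comm[OF fin klt] by auto
  have kr: "kappa_star t k (reorient_topes a TT) = comm t TT (Sre TT a) k (\<lambda>_. True)"
      "kappa_ring t k (reorient_topes a TT) = comm t TT (Sre TT a) k afree"
    using reorient_comm[OF fin klt] by auto
  show ?thesis
    unfolding TT_def[symmetric] using s1k s1r s2k s2r cd1 cd2 kk kr by simp
qed

end
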